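(* Let $(Z_t)$ be a branching process on $[0,\infty]$ and $(v_{s,t})_{(s,t)\in\Delta}$ its Laplace exponents. The following are equivalent: (a) $v_{s,t}\in\mathcal{BF}_\infty$ for all $(s,t)\in\Delta$; (b) for all $0\le s\le t\le u$ and $x>0$, $\mathbb P^{(s,x)}[Z_t\le Z_u]=1$; (c) for all $(s,t)\in\Delta$ and $x>0$, $\mathbb P^{(s,x)}[Z_t\ge x]=1$; (d) for every $(s,t)\in\Delta$ there exists $x>0$ with $\mathbb P^{(s,x)}[Z_t\ge x]=1$.
   Context: $\Delta=\{(s,t):0\le s\le t\}$, $\mathbb H=\{\operatorname{Re}\zeta>0\}$. A branching process on $[0,\infty]$ is a Markov family $(Z_t)$ with probability measures $\mathbb P^{(s,x)}$ ($\mathbb P^{(s,x)}[Z_s=x]=1$ and $\mathbb E^{(s,x)}[f(Z_u)|\mathcal F_{[s,t]}]=\int f(y)k_{t,u}(Z_t,\mathrm dy)$ a.s.) whose transition kernels $(k_{s,t})$ on $[0,\infty]$ satisfy $k_{s,s}(x,\cdot)=\delta_x$, $k_{s,t}\star k_{t,u}=k_{s,u}$ with $(k\star l)(x,B)=\int l(y,B)k(x,\mathrm dy)$, weak continuity of $(s,t,x)\mapsto k_{s,t}(x,\cdot)$ on $\Delta\times[0,\infty)$, $k_{s,t}(x,\cdot)\ast k_{s,t}(y,\cdot)=k_{s,t}(x+y,\cdot)$, $k_{s,t}(0,\cdot)=\delta_0$, $k_{s,t}(\infty,\cdot)=\delta_\infty$. Laplace exponents: Bernstein functions $v_{s,t}$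 with $\int_{[0,\infty)}e^{-\theta y}k_{s,t}(x,\mathrm dy)=e^{-xv_{s,t}(\theta)}$ ($x,\theta>0$), extended holomorphically to $\mathbb H$. $\mathcal{BF}$: Bernstein functions not identically zero (self-maps of $\mathbb H$). Denjoy–Wolff point of $v\in{\sf Hol}(\mathbb H,\mathbb H)$ (not ${\rm id}$, not an elliptic automorphism): unique $\tau\in\overline{\mathbb H}\cup\{\infty\}$ with $v^{\circ n}\to\tau$ locally uniformly. $\mathcal{BF}_\infty$: ${\rm id}_{\mathbb H}$ together with all $v\in\mathcal{BF}\setminus\{{\rm id}\}$ with Denjoy–Wolff point $\infty$. *)

theory Defs
  imports "HOL-Probability.Probability" "HOL-Complex_Analysis.Complex_Analysis"
begin

definition rhp :: "complex set" where
  "rhp = {z. Re z > 0}"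

definition conv_enn :: "ennreal measure \<Rightarrow> ennreal measure \<Rightarrow> ennreal measure" where
  "conv_enn M N = distr (M \<Otimes>\<^sub>M N) borel (\<lambda>(a, b). a + b)"

definition nat_filt :: "'w measure \<Rightarrow> (real \<Rightarrow> 'w \<Rightarrow> ennreal) \<Rightarrow> real \<Rightarrow> real \<Rightarrow> 'w measure" where
  "nat_filt M Z s t = sigma (space M)
     (\<Union>r\<in>{s..t}. {Z r -` B \<inter> space M | B. B \<in> sets (borel :: ennreal measure)})"

definition branching_kernels :: "(real \<Rightarrow> real \<Rightarrow> ennreal \<Rightarrow> ennreal measure) \<Rightarrow> bool" where
  "branching_kernels k \<longleftrightarrow>
     (\<forall>s t x. 0 \<le> s \<and> s \<le> t \<longrightarrow> prob_space (k s t x) \<and> sets (k s t x) = sets borel)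
   \<and> (\<forall>s t B. 0 \<le> s \<and> s \<le> t \<and> B \<in> sets borel \<longrightarrow>
        (\<lambda>x. emeasure (k s t x) B) \<in> borel_measurable borel)
   \<and> (\<forall>s x. 0 \<le> s \<longrightarrow> k s s x = return borel x)
   \<and> (\<forall>s t u x B. 0 \<le> s \<and> s \<le> t \<and> t \<le> u \<and> B \<in> sets borel \<longrightarrow>
        emeasure (k s u x) B = (\<integral>\<^sup>+ y. emeasure (k t u y) B \<partial>(k s t x)))
   \<and> (\<forall>f :: ennreal \<Rightarrow> real. continuous_on UNIV f \<longrightarrow>
        continuous_on {(s, t, x). 0 \<le> s \<and> s \<le> t \<and> x < \<infinity>}
          (\<lambda>(s, t, x). \<integral>y. f y \<partial>(k s t x)))
   \<and> (\<forall>s t x y. 0 \<le> s \<and> s \<le> t \<longrightarrow> conv_enn (k s t x) (k s t y) = k s t (x + y))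
   \<and> (\<forall>s t. 0 \<le> s \<and> s \<le> t \<longrightarrow> k s t 0 = return borel 0 \<and> k s t \<infinity> = return borel \<infinity>)"

definition branching_process ::
  "(real \<Rightarrow> ennreal \<Rightarrow> 'w measure) \<Rightarrow> (real \<Rightarrow> 'w \<Rightarrow> ennreal)
   \<Rightarrow> (real \<Rightarrow> real \<Rightarrow> ennreal \<Rightarrow> ennreal measure) \<Rightarrow> bool" where
  "branching_process P Z k \<longleftrightarrow>
     branching_kernels k
   \<and> (\<forall>s x. 0 \<le> s \<longrightarrow> prob_space (P s x))
   \<and> (\<forall>s x r. 0 \<le> s \<and> s \<le> r \<longrightarrow> Z r \<in> borel_measurable (P s x))
   \<and> (\<forall>s x. 0 \<le> s \<longrightarrow> (AE \<omega> in P s x. Z s \<omega> = x))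
   \<and> (\<forall>s t u x (f :: ennreal \<Rightarrow> real). 0 \<le> s \<and> s \<le> t \<and> t \<le> u
        \<and> f \<in> borel_measurable borel \<and> bounded (range f) \<longrightarrow>
        (AE \<omega> in P s x.
           real_cond_exp (P s x) (nat_filt (P s x) Z s t) (\<lambda>\<omega>. f (Z u \<omega>)) \<omega>
           = (\<integral>y. f y \<partial>(k t u (Z t \<omega>)))))"

definition laplace_exponents ::
  "(real \<Rightarrow> real \<Rightarrow> ennreal \<Rightarrow> ennreal measure) \<Rightarrow> (real \<Rightarrow> real \<Rightarrow> complex \<Rightarrow> complex) \<Rightarrow> bool" where
  "laplace_exponents k v \<longleftrightarrow>
     (\<forall>s t. 0 \<le> s \<and> s \<le> t \<longrightarrow> v s t holomorphic_on rhp
        \<and> (\<forall>x \<theta> :: real. 0 < x \<and> 0 < \<theta> \<longrightarrow>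
             complex_of_real (\<integral>y. indicator {..<\<infinity>} y * exp (- \<theta> * enn2real y) \<partial>(k s t (ennreal x)))
             = exp (- complex_of_real x * v s t (complex_of_real \<theta>))))"

definition bernstein :: "(real \<Rightarrow> real) \<Rightarrow> bool" where
  "bernstein f \<longleftrightarrow>
     (\<forall>x>0. 0 \<le> f x)
   \<and> (\<forall>n x. 0 < x \<longrightarrow> (deriv ^^ n) f field_differentiable (at x))
   \<and> (\<forall>n x. 1 \<le> n \<and> 0 < x \<longrightarrow> 0 \<le> (-1) ^ (n - 1) * (deriv ^^ n) f x)"

definition BF :: "(complex \<Rightarrow> complex) \<Rightarrow> bool" where
  "BF v \<longleftrightarrow> v holomorphic_on rhp
     \<and> (\<forall>x>0. v (complex_of_real x) \<in> \<real>)
     \<and> bernstein (\<lambda>x. Re (v (complex_of_real x)))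
     \<and> (\<exists>z\<in>rhp. v z \<noteq> 0)"

definition DW_infinity :: "(complex \<Rightarrow> complex) \<Rightarrow> bool" where
  "DW_infinity v \<longleftrightarrow>
     (\<forall>K. compact K \<and> K \<subseteq> rhp \<longrightarrow>
        (\<forall>R. eventually (\<lambda>n. \<forall>z\<in>K. R \<le> norm ((v ^^ n) z)) sequentially))"

definition BF_inf :: "(complex \<Rightarrow> complex) \<Rightarrow> bool" where
  "BF_inf v \<longleftrightarrow> (\<forall>z\<in>rhp. v z = z)
     \<or> (BF v \<and> \<not> (\<forall>z\<in>rhp. v z = z) \<and> DW_infinity v)"

end

theory Submission
  imports Defs "HOL-Real_Asymp.Real_Asymp"
begin
primrec fd :: "real \<Rightarrow> nat \<Rightarrow> (real \<Rightarrow> real) \<Rightarrow> real \<Rightarrow> real" where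
  "fd h 0 f x = f x"
| "fd h (Suc n) f x = fd h n f (x + h) - fd h n f x"

lemma fd_Suc': "fd h (Suc n) f x = fd h n (\<lambda>y. f (y + h) - f y) x"
proof (induction n arbitrary: x)
  case 0 then show ?case by simp
next
  case (Suc n)
  have "fd h (Suc (Suc n)) f x = fd h (Suc n) f (x + h) - fd h (Suc n) f x" by (rule fd.simps(2))
  also have "\<dots> = fd h n (\<lambda>y. f (y + h) - f y) (x + h) - fd h n (\<lambda>y. f (y + h) - f y) x"
    using Suc.IH by (simp only:)
  also have "\<dots> = fd h (Suc n) (\<lambda>y. f (y + h) - f y) x" by (rule fd.simps(2)[symmetric])
  finally show ?case .
qed

lemma fd_lin: "fd h n (\<lambda>y. a * f y + b * g y) x = a * fd h n f x + b * fd h n g x"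
  by (induction n arbitrary: x) (auto simp: algebra_simps)

lemma fd_const: "fd h (Suc n) (\<lambda>y. c) x = 0"
proof (induction n arbitrary: x)
  case 0 then show ?case by simp
next
  case (Suc n)
  have "fd h (Suc (Suc n)) (\<lambda>y. c) x = fd h (Suc n) (\<lambda>y. c) (x + h) - fd h (Suc n) (\<lambda>y. c) x" by (rule fd.simps(2))
  then show ?case using Suc.IH by (simp only: diff_self)
qed

lemma fd_tendsto:
  assumes "\<And>y. y \<ge> x \<Longrightarrow> (\<lambda>m. G m y) \<longlonglongrightarrow> F y" "h \<ge> 0"
  shows "(\<lambda>m. fd h n (G m) x) \<longlonglongrightarrow> fd h n F x"
  using assms(1)
proof (induction n arbitrary: x)
  case 0 then show ?case by simp
next
  case (Suc n)
  have a: "(\<lambda>m. fd h n (G m) (x+h)) \<longlonglongrightarrow> fd h n F (x+h)"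
    by (rule Suc.IH) (use Suc.prems assms(2) in auto)
  have b: "(\<lambda>m. fd h n (G m) x) \<longlonglongrightarrow> fd h n F x"
    by (rule Suc.IH) (use Suc.prems in auto)
  show ?case using tendsto_diff[OF a b] by simp
qed

lemma fd_mvt:
  assumes "0 < h" "a < \<theta>"
    and "\<And>j x. j < n \<Longrightarrow> a < x \<Longrightarrow> (D j has_real_derivative D (Suc j) x) (at x)"
  shows "\<exists>\<xi>. \<theta> \<le> \<xi> \<and> \<xi> \<le> \<theta> + real n * h \<and> fd h n (D 0) \<theta> = h ^ n * D n \<xi>"
  using assms(3)
proof (induction n arbitrary: D)
  case 0 then show ?case by auto
next
  case (Suc n)
  define E where "E j x = D j (x + h) - D j x" for j x
  have E: "(E j has_real_derivative E (Suc j) x) (at x)" if "j < n" "a < x" for j x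
  proof -
    have 1: "(D j has_real_derivative D (Suc j) (x+h)) (at (x+h))"
      using Suc.prems[of j "x+h"] that assms(1) by auto
    have 2: "((\<lambda>y. D j (y + h)) has_real_derivative D (Suc j) (x+h)) (at x)"
      using 1 DERIV_shift by blast
    show ?thesis unfolding E_def
      by (rule derivative_eq_intros 2 Suc.prems)+ (use that in auto)
  qed
  obtain \<xi> where xi: "\<theta> \<le> \<xi>" "\<xi> \<le> \<theta> + real n * h" "fd h n (E 0) \<theta> = h ^ n * E n \<xi>"
    using Suc.IH[of E] E by blast
  have "\<exists>z>\<xi>. z < \<xi> + h \<and> D n (\<xi> + h) - D n \<xi> = (\<xi> + h - \<xi>) * D (Suc n) z"
    by (rule MVT2) (use Suc.prems[of n] assms xi in auto)
  then obtain z where z: "\<xi> < z" "z < \<xi> + h" "D n (\<xi> + h) - D n \<xi> = h * D (Suc n) z" by auto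
  have "fd h (Suc n) (D 0) \<theta> = fd h n (E 0) \<theta>" unfolding fd_Suc' E_def by simp
  also have "\<dots> = h ^ Suc n * D (Suc n) z" using xi z unfolding E_def by simp
  finally show ?case using xi z by (intro exI[of _ z]) (auto simp: algebra_simps)
qed

lemma open_rhp: "open rhp" unfolding rhp_def by (rule open_halfspace_Re_gt)

lemma bern:
  fixes v :: "complex \<Rightarrow> complex"
  assumes hol: "v holomorphic_on rhp"
    and pos: "\<forall>x>0. 0 \<le> Re (v (complex_of_real x))"
    and fdsign: "\<And>n h \<theta>. 1 \<le> n \<Longrightarrow> 0 < h \<Longrightarrow> 0 < \<theta> \<Longrightarrow>
        0 \<le> (-1) ^ (n - 1) * fd h n (\<lambda>x. Re (v (complex_of_real x))) \<theta>"
  shows "bernstein (\<lambda>x. Re (v (complex_of_real x)))"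
proof -
  define F where "F = (\<lambda>x. Re (v (complex_of_real x)))"
  define D where "D j x = Re ((deriv ^^ j) v (complex_of_real x))" for j x
  have Dd: "(D j has_real_derivative D (Suc j) x) (at x)" if "0 < x" for j x
  proof -
    have hj: "(deriv ^^ j) v holomorphic_on rhp" by (rule holomorphic_higher_deriv[OF hol open_rhp])
    have "((deriv ^^ j) v has_field_derivative deriv ((deriv ^^ j) v) (of_real x)) (at (of_real x))"
      by (rule holomorphic_derivI[OF hj open_rhp]) (simp add: rhp_def that)
    then have "((\<lambda>t. (deriv ^^ j) v (of_real t)) has_vector_derivative deriv ((deriv ^^ j) v) (of_real x)) (at x)"
      by (rule has_vector_derivative_real_field)
    then have "((\<lambda>t. Re ((deriv ^^ j) v (of_real t))) has_field_derivative Re (deriv ((deriv ^^ j) v) (of_real x))) (at x)"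
      by (rule has_field_derivative_Re)
    moreover have "D j = (\<lambda>t. Re ((deriv ^^ j) v (complex_of_real t)))" by (simp add: D_def fun_eq_iff)
    moreover have "D (Suc j) x = Re (deriv ((deriv ^^ j) v) (complex_of_real x))" by (simp add: D_def)
    ultimately show ?thesis by simp
  qed
  have D0: "D 0 = F" by (simp add: D_def F_def fun_eq_iff)
  have Dn: "(deriv ^^ n) F x = D n x" if "0 < x" for n x
    using that
  proof (induction n arbitrary: x)
    case 0 then show ?case by (simp add: D0)
  next
    case (Suc n)
    have "((deriv ^^ n) F has_real_derivative D (Suc n) x) (at x)"
      by (rule has_field_derivative_transform_within_open[OF Dd[of x n], where S="{0<..}"])
         (use Suc in auto)
    then show ?case by (simp add: DERIV_imp_deriv)
  qed
  have diff: "(deriv ^^ n) F field_differentiable (at x)" if "0 < x" for n x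
  proof -
    have "((deriv ^^ n) F has_real_derivative D (Suc n) x) (at x)"
      by (rule has_field_derivative_transform_within_open[OF Dd[of x n], where S="{0<..}"])
         (use Dn that in auto)
    then show ?thesis unfolding field_differentiable_def by blast
  qed
  have sign: "0 \<le> (-1) ^ (n - 1) * D n \<theta>" if n: "1 \<le> n" and th: "0 < \<theta>" for n \<theta>
  proof (rule ccontr)
    define s :: real where "s = (-1) ^ (n - 1)"
    have s2: "\<bar>s\<bar> = 1" by (simp add: s_def)
    assume "\<not> 0 \<le> (-1) ^ (n - 1) * D n \<theta>"
    then have neg: "s * D n \<theta> < 0" by (simp add: s_def)
    define e where "e = - (s * D n \<theta>)"
    have e: "0 < e" using neg by (simp add: e_def)
    have "isCont (D n) \<theta>" using Dd[OF th, of n] by (rule DERIV_isCont)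
    then have "(D n \<longlongrightarrow> D n \<theta>) (at \<theta>)" by (simp add: isCont_def)
    from LIM_D[OF this e] obtain \<delta> where \<delta>: "0 < \<delta>"
      "\<And>y. y \<noteq> \<theta> \<and> norm (y - \<theta>) < \<delta> \<longrightarrow> norm (D n y - D n \<theta>) < e" by blast
    have neg2: "s * D n y < 0" if "\<bar>y - \<theta>\<bar> < \<delta>" for y
    proof (cases "y = \<theta>")
      case True then show ?thesis using neg by simp
    next
      case False
      then have "\<bar>D n y - D n \<theta>\<bar> < e" using \<delta>(2)[of y] that by auto
      then have "\<bar>s * D n y - s * D n \<theta>\<bar> < e" using s2
        by (metis abs_mult mult.left_neutral right_diff_distrib)
      then show ?thesis unfolding e_def by linarith
    qed
    define h where "h = \<delta> / (real n + 1)"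
    have h: "0 < h" using \<delta> by (simp add: h_def)
    have nh: "real n * h < \<delta>" using \<delta> by (simp add: h_def field_simps)
    obtain \<xi> where xi: "\<theta> \<le> \<xi>" "\<xi> \<le> \<theta> + real n * h" "fd h n (D 0) \<theta> = h ^ n * D n \<xi>"
      using fd_mvt[of h 0 \<theta> n D] h th Dd by blast
    have "s * D n \<xi> < 0" using neg2[of \<xi>] xi nh by auto
    moreover have "0 < h ^ n" using h by simp
    ultimately have "h ^ n * (s * D n \<xi>) < 0" by (simp add: mult_pos_neg)
    then have "s * fd h n (D 0) \<theta> < 0" using xi(3) by (simp add: mult.left_commute)
    moreover have "0 \<le> s * fd h n (D 0) \<theta>" using fdsign[OF n h th] by (simp add: s_def D0 F_def)
    ultimately show False by simp
  qed
  show ?thesis unfolding bernstein_def F_def[symmetric]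
    using pos diff sign Dn by (auto simp: F_def)
qed

definition Lap :: "ennreal measure \<Rightarrow> real \<Rightarrow> real" where
  "Lap \<mu> \<theta> = (\<integral>y. indicator {..<\<infinity>} y * exp (- \<theta> * enn2real y) \<partial>\<mu>)"

lemma Lap_int:
  assumes "finite_measure \<mu>" "sets \<mu> = sets borel" "0 \<le> \<theta>" "0 \<le> h"
  shows "integrable \<mu> (\<lambda>y. indicator {..<\<infinity>} y * (exp (- h * enn2real y) - 1) ^ n * exp (- \<theta> * enn2real y))"
proof (rule finite_measure.integrable_const_bound[OF assms(1), where B=1])
  show "(\<lambda>y. indicator {..<\<infinity>} y * (exp (- h * enn2real y) - 1) ^ n * exp (- \<theta> * enn2real y)) \<in> borel_measurable \<mu>"
    using assms(2) by (simp add: measurable_cong_sets[OF assms(2) refl])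
  have "norm (indicator {..<\<infinity>} y * (exp (- h * enn2real y) - 1) ^ n * exp (- \<theta> * enn2real y)) \<le> 1" for y :: ennreal
  proof -
    have q: "exp (- h * enn2real y) \<le> 1" using assms(4) by (simp add: mult_nonneg_nonneg)
    have p: "0 < exp (- h * enn2real y)" by simp
    have e1: "\<bar>exp (- h * enn2real y) - 1\<bar> \<le> 1" using p q by (simp add: abs_le_iff)
    have a: "\<bar>(exp (- h * enn2real y) - 1) ^ n\<bar> \<le> 1" unfolding power_abs using e1 by (simp add: power_le_one)
    have b: "\<bar>exp (- \<theta> * enn2real y)\<bar> \<le> 1" using assms(3) by (simp add: mult_nonneg_nonneg)
    have c: "\<bar>indicator {..<\<infinity>} y :: real\<bar> \<le> 1" by (simp add: indicator_def)
    have "\<bar>indicator {..<\<infinity>} y * (exp (- h * enn2real y) - 1) ^ n * exp (- \<theta> * enn2real y)\<bar>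
        = \<bar>indicator {..<\<infinity>} y :: real\<bar> * \<bar>(exp (- h * enn2real y) - 1) ^ n\<bar> * \<bar>exp (- \<theta> * enn2real y)\<bar>"
      by (simp add: abs_mult)
    also have "\<dots> \<le> 1 * 1 * 1" using a b c by (intro mult_mono) auto
    finally show ?thesis by simp
  qed
  then show "AE y in \<mu>. norm (indicator {..<\<infinity>} y * (exp (- h * enn2real y) - 1) ^ n * exp (- \<theta> * enn2real y)) \<le> 1"
    by simp
qed

lemma fd_Lap:
  assumes "finite_measure \<mu>" "sets \<mu> = sets borel" "0 \<le> \<theta>" "0 \<le> h"
  shows "fd h n (Lap \<mu>) \<theta> = (\<integral>y. indicator {..<\<infinity>} y * (exp (- h * enn2real y) - 1) ^ n * exp (- \<theta> * enn2real y) \<partial>\<mu>)"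
  using assms(3)
proof (induction n arbitrary: \<theta>)
  case 0 then show ?case by (simp add: Lap_def)
next
  case (Suc n)
  have "fd h (Suc n) (Lap \<mu>) \<theta> = fd h n (Lap \<mu>) (\<theta> + h) - fd h n (Lap \<mu>) \<theta>" by simp
  also have "\<dots> = (\<integral>y. indicator {..<\<infinity>} y * (exp (- h * enn2real y) - 1) ^ n * exp (- (\<theta> + h) * enn2real y) \<partial>\<mu>)
     - (\<integral>y. indicator {..<\<infinity>} y * (exp (- h * enn2real y) - 1) ^ n * exp (- \<theta> * enn2real y) \<partial>\<mu>)"
  proof -
    have a: "fd h n (Lap \<mu>) (\<theta> + h) = (\<integral>y. indicator {..<\<infinity>} y * (exp (- h * enn2real y) - 1) ^ n * exp (- (\<theta> + h) * enn2real y) \<partial>\<mu>)"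
      by (rule Suc.IH) (use Suc.prems assms(4) in simp)
    have b: "fd h n (Lap \<mu>) \<theta> = (\<integral>y. indicator {..<\<infinity>} y * (exp (- h * enn2real y) - 1) ^ n * exp (- \<theta> * enn2real y) \<partial>\<mu>)"
      by (rule Suc.IH) (use Suc.prems in simp)
    show ?thesis by (simp only: a b)
  qed
  also have "\<dots> = (\<integral>y. indicator {..<\<infinity>} y * (exp (- h * enn2real y) - 1) ^ n * exp (- (\<theta> + h) * enn2real y)
      - indicator {..<\<infinity>} y * (exp (- h * enn2real y) - 1) ^ n * exp (- \<theta> * enn2real y) \<partial>\<mu>)"
    by (rule Bochner_Integration.integral_diff[symmetric]; rule Lap_int) (use assms Suc in auto)
  also have "\<dots> = (\<integral>y. indicator {..<\<infinity>} y * (exp (- h * enn2real y) - 1) ^ Suc n * exp (- \<theta> * enn2real y) \<partial>\<mu>)"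
  proof (rule Bochner_Integration.integral_cong[OF refl])
    fix y
    have "exp (- (\<theta> + h) * enn2real y) = exp (- h * enn2real y) * exp (- \<theta> * enn2real y)"
      by (simp add: exp_add[symmetric] algebra_simps)
    then show "indicator {..<\<infinity>} y * (exp (- h * enn2real y) - 1) ^ n * exp (- (\<theta> + h) * enn2real y)
      - indicator {..<\<infinity>} y * (exp (- h * enn2real y) - 1) ^ n * exp (- \<theta> * enn2real y)
      = indicator {..<\<infinity>} y * (exp (- h * enn2real y) - 1) ^ Suc n * exp (- \<theta> * enn2real y)"
      by (simp add: algebra_simps)
  qed
  finally show ?case .
qed

lemma fd_Lap_sign:
  assumes "finite_measure \<mu>" "sets \<mu> = sets borel" "0 \<le> \<theta>" "0 \<le> h"
  shows "0 \<le> (-1) ^ n * fd h n (Lap \<mu>) \<theta>"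
proof -
  have "(-1) ^ n * fd h n (Lap \<mu>) \<theta> =
      (\<integral>y. indicator {..<\<infinity>} y * (1 - exp (- h * enn2real y)) ^ n * exp (- \<theta> * enn2real y) \<partial>\<mu>)"
  proof -
    have "(-1) ^ n * fd h n (Lap \<mu>) \<theta> = (\<integral>y. (-1) ^ n * (indicator {..<\<infinity>} y * (exp (- h * enn2real y) - 1) ^ n * exp (- \<theta> * enn2real y)) \<partial>\<mu>)"
      using fd_Lap[OF assms] by simp
    also have "\<dots> = (\<integral>y. indicator {..<\<infinity>} y * (1 - exp (- h * enn2real y)) ^ n * exp (- \<theta> * enn2real y) \<partial>\<mu>)"
    proof (rule Bochner_Integration.integral_cong[OF refl])
      fix y
      have "(-1::real) ^ n * (exp (- h * enn2real y) - 1) ^ n = (1 - exp (- h * enn2real y)) ^ n"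
        by (simp add: power_mult_distrib[symmetric])
      then show "(-1) ^ n * (indicator {..<\<infinity>} y * (exp (- h * enn2real y) - 1) ^ n * exp (- \<theta> * enn2real y))
         = indicator {..<\<infinity>} y * (1 - exp (- h * enn2real y)) ^ n * exp (- \<theta> * enn2real y)"
        by (metis (no_types, lifting) mult.assoc mult.left_commute)
    qed
    finally show ?thesis .
  qed
  also have "0 \<le> \<dots>"
    using assms(4) by (intro integral_nonneg_AE AE_I2 mult_nonneg_nonneg) (auto simp: mult_nonneg_nonneg)
  finally show ?thesis .
qed

lemma Lap_le1:
  assumes "prob_space \<mu>" "sets \<mu> = sets borel" "0 \<le> \<theta>"
  shows "Lap \<mu> \<theta> \<le> 1" "0 \<le> Lap \<mu> \<theta>"
proof -
  interpret prob_space \<mu> by fact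
  have i: "integrable \<mu> (\<lambda>y. indicator {..<\<infinity>} y * (exp (- 0 * enn2real y) - 1) ^ 0 * exp (- \<theta> * enn2real y))"
    by (rule Lap_int) (use assms in auto)
  have "Lap \<mu> \<theta> \<le> (\<integral>y. 1 \<partial>\<mu>)" unfolding Lap_def
    using i assms(3) by (intro integral_mono) (auto simp: indicator_def mult_nonneg_nonneg)
  then show "Lap \<mu> \<theta> \<le> 1" by (simp add: prob_space)
  show "0 \<le> Lap \<mu> \<theta>" unfolding Lap_def by (intro integral_nonneg_AE AE_I2) auto
qed

lemma Lap_mono:
  assumes "finite_measure \<mu>" "sets \<mu> = sets borel" "0 \<le> \<theta>1" "\<theta>1 \<le> \<theta>2"
  shows "Lap \<mu> \<theta>2 \<le> Lap \<mu> \<theta>1"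
proof -
  have i: "integrable \<mu> (\<lambda>y. indicator {..<\<infinity>} y * (exp (- 0 * enn2real y) - 1) ^ 0 * exp (- \<theta> * enn2real y))"
    if "0 \<le> \<theta>" for \<theta>
    by (rule Lap_int) (use assms that in auto)
  show ?thesis unfolding Lap_def
    using i[of \<theta>1] i[of \<theta>2] assms(3,4)
    by (intro integral_mono) (auto simp: indicator_def intro!: mult_right_mono)
qed

lemma lim_aux: "(\<lambda>m. real (Suc m) * (1 - exp(-c / real (Suc m)))) \<longlonglongrightarrow> c"
  by real_asymp

definition CL :: "ennreal measure \<Rightarrow> complex \<Rightarrow> complex" where
  "CL \<mu> z = (\<integral>y. complex_of_real (indicator {..<\<infinity>} y) * exp (- z * complex_of_real (enn2real y)) \<partial>\<mu>)"

lemma CL_int: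
  assumes "finite_measure \<mu>" "sets \<mu> = sets borel" "0 \<le> Re z"
  shows "integrable \<mu> (\<lambda>y. complex_of_real (indicator {..<\<infinity>} y) * exp (- z * complex_of_real (enn2real y)))"
proof (rule finite_measure.integrable_const_bound[OF assms(1), where B=1])
  show "(\<lambda>y. complex_of_real (indicator {..<\<infinity>} y) * exp (- z * complex_of_real (enn2real y))) \<in> borel_measurable \<mu>"
    by (simp add: measurable_cong_sets[OF assms(2) refl])
  have "norm (complex_of_real (indicator {..<\<infinity>} y) * exp (- z * complex_of_real (enn2real y))) \<le> 1" for y :: ennreal
  proof -
    have "norm (complex_of_real (indicator {..<\<infinity>} y) * exp (- z * complex_of_real (enn2real y)))
        = indicator {..<\<infinity>} y * exp (- Re z * enn2real y)"
      by (simp add: norm_mult indicator_def)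
    also have "\<dots> \<le> 1" using assms(3) by (simp add: indicator_def mult_nonneg_nonneg)
    finally show ?thesis .
  qed
  then show "AE y in \<mu>. norm (complex_of_real (indicator {..<\<infinity>} y) * exp (- z * complex_of_real (enn2real y))) \<le> 1"
    by simp
qed

lemma exp_quot_bound:
  fixes Y :: real and w z0 :: complex
  assumes Y: "0 \<le> Y" and r: "0 < Re z0" and wz: "norm (w - z0) < Re z0 / 2" and ne: "w \<noteq> z0"
  shows "norm ((exp (- w * of_real Y) - exp (- z0 * of_real Y)) / (w - z0)) \<le> 2 / Re z0"
proof -
  define r where "r = Re z0"
  define S where "S = ball z0 (r / 2)"
  define B where "B = Y * exp (- (r / 2) * Y)"
  have der: "((\<lambda>u. exp (- u * of_real Y)) has_field_derivative (- of_real Y * exp (- u * of_real Y))) (at u within S)" for u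
    by (auto intro!: derivative_eq_intros)
  have bnd: "norm (- of_real Y * exp (- u * of_real Y)) \<le> B" if "u \<in> S" for u
  proof -
    have "\<bar>Re (u - z0)\<bar> \<le> norm (u - z0)" by (rule abs_Re_le_cmod)
    moreover have "norm (u - z0) < r / 2" using that by (simp add: S_def dist_norm norm_minus_commute)
    ultimately have "r / 2 < Re u" by (simp add: r_def)
    then have "(r / 2) * Y \<le> Re u * Y" using Y by (intro mult_right_mono) auto
    then have "exp (- Re u * Y) \<le> exp (- (r / 2) * Y)" by simp
    then show ?thesis using Y by (simp add: norm_mult B_def mult_left_mono)
  qed
  have "norm (exp (- w * of_real Y) - exp (- z0 * of_real Y)) \<le> B * norm (w - z0)"
    by (rule field_differentiable_bound[OF _ der bnd]) 
       (use wz r in \<open>auto simp: S_def r_def dist_norm norm_minus_commute\<close>)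
  then have "norm ((exp (- w * of_real Y) - exp (- z0 * of_real Y)) / (w - z0)) \<le> B"
    using ne by (simp add: norm_divide divide_le_eq)
  also have "B \<le> 2 / r"
  proof -
    define t where "t = (r / 2) * Y"
    have "1 + t \<le> exp t" by (rule exp_ge_add_one_self)
    moreover have "Y * r = 2 * t" by (simp add: t_def)
    ultimately have "Y * r \<le> 2 * exp ((r / 2) * Y)" unfolding t_def[symmetric] by linarith
    then have "Y \<le> (2 / r) * exp ((r / 2) * Y)" using r by (simp add: r_def field_simps)
    then have "Y * exp (- (r / 2) * Y) \<le> (2 / r) * exp ((r / 2) * Y) * exp (- (r / 2) * Y)"
      by (rule mult_right_mono) auto
    also have "\<dots> = 2 / r" by (simp add: mult.assoc exp_add[symmetric])
    finally show ?thesis by (simp add: B_def)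
  qed
  finally show ?thesis by (simp add: r_def)
qed

lemma CL_deriv:
  assumes fin: "finite_measure \<mu>" and sets: "sets \<mu> = sets borel" and r: "0 < Re z0"
  shows "(CL \<mu> has_field_derivative
     (\<integral>y. complex_of_real (indicator {..<\<infinity>} y) * (- complex_of_real (enn2real y)) * exp (- z0 * complex_of_real (enn2real y)) \<partial>\<mu>)) (at z0)"
proof -
  define g where "g w y = complex_of_real (indicator {..<\<infinity>} y) * exp (- w * complex_of_real (enn2real y))" for w y
  define f where "f y = complex_of_real (indicator {..<\<infinity>} y) * (- complex_of_real (enn2real y)) * exp (- z0 * complex_of_real (enn2real y))" for y
  have diffq: "(CL \<mu> w - CL \<mu> z0) / (w - z0) = (\<integral>y. (g w y - g z0 y) / (w - z0) \<partial>\<mu>)" if "0 \<le> Re w" for w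
  proof -
    have "CL \<mu> w - CL \<mu> z0 = (\<integral>y. g w y - g z0 y \<partial>\<mu>)"
      unfolding CL_def g_def
      by (rule Bochner_Integration.integral_diff[symmetric]; rule CL_int) (use fin sets that r in auto)
    then show ?thesis by simp
  qed
  have pw: "((\<lambda>w. (g w y - g z0 y) / (w - z0)) \<longlongrightarrow> f y) (at z0)" for y
  proof -
    have "((\<lambda>w. g w y) has_field_derivative f y) (at z0)"
      unfolding g_def f_def by (auto intro!: derivative_eq_intros)
    then show ?thesis by (simp add: has_field_derivative_iff)
  qed
  show ?thesis
    unfolding has_field_derivative_iff tendsto_at_iff_sequentially
  proof (intro allI impI)
    fix X :: "nat \<Rightarrow> complex"
    assume Xne: "\<forall>i. X i \<in> UNIV - {z0}" and X: "X \<longlonglongrightarrow> z0"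
    obtain N where N: "\<And>n. n \<ge> N \<Longrightarrow> norm (X n - z0) < Re z0 / 2"
      using LIMSEQ_D[OF X, of "Re z0 / 2"] r by auto
    define s where "s i y = (g (X (i + N)) y - g z0 y) / (X (i + N) - z0)" for i y
    have ReX: "0 \<le> Re (X (i + N))" for i
    proof -
      have "\<bar>Re (X (i + N) - z0)\<bar> \<le> norm (X (i + N) - z0)" by (rule abs_Re_le_cmod)
      then show ?thesis using N[of "i + N"] r by auto
    qed
    have lim: "(\<lambda>i. integral\<^sup>L \<mu> (s i)) \<longlonglongrightarrow> integral\<^sup>L \<mu> f"
    proof (rule integral_dominated_convergence[where w="\<lambda>_. 2 / Re z0"])
      show "f \<in> borel_measurable \<mu>" unfolding f_def by (simp add: measurable_cong_sets[OF sets refl])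
      show "s i \<in> borel_measurable \<mu>" for i unfolding s_def g_def by (simp add: measurable_cong_sets[OF sets refl])
      show "integrable \<mu> (\<lambda>_. 2 / Re z0)" by (rule finite_measure.integrable_const[OF fin])
      show "AE y in \<mu>. (\<lambda>i. s i y) \<longlonglongrightarrow> f y"
      proof (rule AE_I2)
        fix y
        have X': "(\<lambda>i. X (i + N)) \<longlonglongrightarrow> z0" using X by (rule LIMSEQ_ignore_initial_segment)
        show "(\<lambda>i. s i y) \<longlonglongrightarrow> f y"
          using pw[of y] X' Xne unfolding tendsto_at_iff_sequentially s_def comp_def by auto
      qed
      show "AE y in \<mu>. norm (s i y) \<le> 2 / Re z0" for i
      proof (rule AE_I2)
        fix y :: ennreal
        show "norm (s i y) \<le> 2 / Re z0"
        proof (cases "y < \<infinity>")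
          case True
          have "s i y = (exp (- X (i + N) * of_real (enn2real y)) - exp (- z0 * of_real (enn2real y))) / (X (i + N) - z0)"
            using True by (simp add: s_def g_def)
          also have "norm \<dots> \<le> 2 / Re z0"
            by (rule exp_quot_bound) (use N[of "i + N"] Xne r in auto)
          finally show ?thesis .
        next
          case False then show ?thesis using r by (simp add: s_def g_def)
        qed
      qed
    qed
    have eq: "(CL \<mu> (X (i + N)) - CL \<mu> z0) / (X (i + N) - z0) = integral\<^sup>L \<mu> (s i)" for i
      unfolding s_def by (rule diffq[OF ReX])
    have "(\<lambda>i. (CL \<mu> (X (i + N)) - CL \<mu> z0) / (X (i + N) - z0)) \<longlonglongrightarrow> integral\<^sup>L \<mu> f"
      unfolding eq by (rule lim)
    then have "((\<lambda>w. (CL \<mu> w - CL \<mu> z0) / (w - z0)) \<circ> X) \<longlonglongrightarrow> integral\<^sup>L \<mu> f"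
      unfolding comp_def by (rule LIMSEQ_offset)
    then show "((\<lambda>w. (CL \<mu> w - CL \<mu> z0) / (w - z0)) \<circ> X) \<longlonglongrightarrow> (\<integral>y. complex_of_real (indicator {..<\<infinity>} y) * (- complex_of_real (enn2real y)) * exp (- z0 * complex_of_real (enn2real y)) \<partial>\<mu>)"
      unfolding f_def .
  qed
qed

lemma CL_holo:
  assumes "finite_measure \<mu>" "sets \<mu> = sets borel"
  shows "CL \<mu> holomorphic_on rhp"
  unfolding holomorphic_on_def
proof
  fix z assume "z \<in> rhp"
  then have "0 < Re z" by (simp add: rhp_def)
  from CL_deriv[OF assms this] show "CL \<mu> field_differentiable at z within rhp"
    unfolding field_differentiable_def using has_field_derivative_at_within by blast
qed

definition LX :: "(real \<Rightarrow> ennreal measure) \<Rightarrow> (complex \<Rightarrow> complex) \<Rightarrow> bool" where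
  "LX M u \<longleftrightarrow> u holomorphic_on rhp \<and> (\<forall>x>0. prob_space (M x) \<and> sets (M x) = sets borel)
     \<and> (\<forall>x \<theta>. 0 < x \<and> 0 < \<theta> \<longrightarrow> complex_of_real (Lap (M x) \<theta>) = exp (- complex_of_real x * u (complex_of_real \<theta>)))"

lemma ps_fin: "prob_space M \<Longrightarrow> finite_measure M" by (simp add: prob_space_def)

lemma ident_rhp:
  assumes "f holomorphic_on rhp" "0 < a" "a < b" "\<And>\<theta>. a < \<theta> \<Longrightarrow> \<theta> < b \<Longrightarrow> f (complex_of_real \<theta>) = 0"
    and "z \<in> rhp"
  shows "f z = 0"
proof -
  define m where "m = (a + b) / 2"
  have conn: "connected rhp" unfolding rhp_def by (rule convex_connected[OF convex_halfspace_Re_gt])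
  have sub: "complex_of_real ` {a<..<b} \<subseteq> rhp" using assms(2) by (auto simp: rhp_def)
  have mS: "complex_of_real m \<in> rhp" using assms(2,3) by (simp add: rhp_def m_def)
  have lim: "complex_of_real m islimpt complex_of_real ` {a<..<b}"
    unfolding islimpt_approachable
  proof (intro allI impI)
    fix e :: real assume e: "0 < e"
    define d where "d = min (e / 2) ((b - a) / 4)"
    have d1: "d \<le> (b - a) / 4" "d \<le> e / 2" unfolding d_def by (rule min.cobounded2, rule min.cobounded1)
    have d: "0 < d" "d < e" "d < (b - a) / 2" using e assms(3) d1 by (auto simp: d_def)
    have "a < m + d" using d assms(3) unfolding m_def by (simp add: field_simps)
    have "m + d < b" using d assms(3) unfolding m_def by (simp add: field_simps)
    with \<open>a < m + d\<close> have i1: "m + d \<in> {a<..<b}" by simp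
    have i2: "complex_of_real (m + d) \<noteq> complex_of_real m" using d by simp
    have i3: "dist (complex_of_real (m + d)) (complex_of_real m) < e" using d by (simp add: dist_norm)
    show "\<exists>x'\<in>complex_of_real ` {a<..<b}. x' \<noteq> complex_of_real m \<and> dist x' (complex_of_real m) < e"
      using i1 i2 i3 by blast
  qed
  show ?thesis
    by (rule analytic_continuation[OF assms(1) open_rhp conn sub mS lim]) (use assms(4) assms(5) in auto)
qed

lemma LX_real:
  assumes LX: "LX M u" and th: "0 < \<theta>"
  shows "u (complex_of_real \<theta>) = complex_of_real (Re (u (complex_of_real \<theta>)))"
    and "\<And>x. 0 < x \<Longrightarrow> Lap (M x) \<theta> = exp (- x * Re (u (complex_of_real \<theta>)))"
proof -
  define c where "c = u (complex_of_real \<theta>)"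
  have eq: "complex_of_real (Lap (M x) \<theta>) = exp (- complex_of_real x * c)" if "0 < x" for x
    using LX that th by (simp add: LX_def c_def)
  have pos: "0 < Lap (M x) \<theta>" if "0 < x" for x
  proof -
    have "0 \<le> Lap (M x) \<theta>" using LX that th by (intro Lap_le1) (auto simp: LX_def)
    moreover have "Lap (M x) \<theta> \<noteq> 0" using eq[OF that] by (metis exp_not_eq_zero of_real_0)
    ultimately show ?thesis by simp
  qed
  have cos: "0 < cos (x * Im c)" if "0 < x" for x
  proof -
    have "Re (complex_of_real (Lap (M x) \<theta>)) = Re (exp (- complex_of_real x * c))" using eq[OF that] by simp
    then have "Lap (M x) \<theta> = exp (- x * Re c) * cos (x * Im c)" by (simp add: Re_exp)
    then show ?thesis using pos[OF that] by (simp add: zero_less_mult_iff)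
  qed
  have "Im c = 0"
  proof (rule ccontr)
    assume ne: "Im c \<noteq> 0"
    define x where "x = pi / \<bar>Im c\<bar>"
    have x: "0 < x" using ne by (simp add: x_def)
    have "x * Im c = pi \<or> x * Im c = - pi" using ne by (auto simp: x_def abs_if)
    then have "cos (x * Im c) = -1" by auto
    then show False using cos[OF x] by simp
  qed
  then show c: "u (complex_of_real \<theta>) = complex_of_real (Re (u (complex_of_real \<theta>)))"
    unfolding c_def[symmetric] by (simp add: complex_eq_iff)
  fix x :: real assume x: "0 < x"
  have "complex_of_real (Lap (M x) \<theta>) = exp (- complex_of_real x * complex_of_real (Re c))"
    using eq[OF x] c by (simp add: c_def)
  also have "\<dots> = complex_of_real (exp (- x * Re c))" by (simp add: exp_of_real[symmetric])
  finally show "Lap (M x) \<theta> = exp (- x * Re (u (complex_of_real \<theta>)))" by (simp add: c_def)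
qed

lemma LX_V_nonneg:
  assumes LX: "LX M u" and th: "0 < \<theta>"
  shows "0 \<le> Re (u (complex_of_real \<theta>))"
proof -
  have "Lap (M 1) \<theta> \<le> 1" using LX th by (intro Lap_le1) (auto simp: LX_def)
  then have "exp (- Re (u (complex_of_real \<theta>))) \<le> 1" using LX_real(2)[OF LX th, of 1] by simp
  then show ?thesis by simp
qed

lemma LX_V_mono:
  assumes LX: "LX M u" and th: "0 < \<theta>1" "\<theta>1 \<le> \<theta>2"
  shows "Re (u (complex_of_real \<theta>1)) \<le> Re (u (complex_of_real \<theta>2))"
proof -
  have fin: "finite_measure (M 1)" "sets (M 1) = sets borel" using LX by (auto simp: LX_def ps_fin)
  have "Lap (M 1) \<theta>2 \<le> Lap (M 1) \<theta>1" using th by (intro Lap_mono[OF fin]) auto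
  then have "exp (- Re (u (complex_of_real \<theta>2))) \<le> exp (- Re (u (complex_of_real \<theta>1)))"
    using LX_real(2)[OF LX th(1), of 1] LX_real(2)[OF LX, of \<theta>2 1] th by simp
  then show ?thesis by simp
qed

lemma LX_fdsign:
  assumes LX: "LX M u" and n: "1 \<le> n" and h: "0 < h" and th: "0 < \<theta>"
  shows "0 \<le> (-1) ^ (n - 1) * fd h n (\<lambda>x. Re (u (complex_of_real x))) \<theta>"
proof -
  define V where "V x = Re (u (complex_of_real x))" for x
  obtain n' where n': "n = Suc n'" using n by (cases n) auto
  define Mm where "Mm m = M (1 / real (Suc m))" for m
  define G where "G m y = real (Suc m) * (1 - Lap (Mm m) y)" for m y
  have fin: "finite_measure (Mm m)" "sets (Mm m) = sets borel" for m
    using LX by (auto simp: LX_def Mm_def ps_fin)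
  have conv: "(\<lambda>m. G m y) \<longlonglongrightarrow> V y" if "y \<ge> \<theta>" for y
  proof -
    have y: "0 < y" using th that by simp
    have "G m y = real (Suc m) * (1 - exp (- V y / real (Suc m)))" for m
      using LX_real(2)[OF LX y, of "1 / real (Suc m)"] by (simp add: G_def Mm_def V_def)
    then show ?thesis using lim_aux[of "V y"] by simp
  qed
  have lim: "(\<lambda>m. fd h n (G m) \<theta>) \<longlonglongrightarrow> fd h n V \<theta>"
    by (rule fd_tendsto) (use conv h in auto)
  have fdG: "fd h n (G m) \<theta> = - real (Suc m) * fd h n (Lap (Mm m)) \<theta>" for m
  proof -
    have "G m = (\<lambda>y. real (Suc m) * (\<lambda>_. 1) y + (- real (Suc m)) * Lap (Mm m) y)"
      by (simp add: G_def fun_eq_iff algebra_simps)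
    then have "fd h n (G m) \<theta> = real (Suc m) * fd h n (\<lambda>_. 1) \<theta> + (- real (Suc m)) * fd h n (Lap (Mm m)) \<theta>"
      by (simp only: fd_lin)
    then show ?thesis using fd_const[of h n' 1 \<theta>] by (simp add: n')
  qed
  have nonneg: "0 \<le> (-1) ^ (n - 1) * fd h n (G m) \<theta>" for m
  proof -
    have "0 \<le> (-1) ^ n * fd h n (Lap (Mm m)) \<theta>" by (rule fd_Lap_sign[OF fin]) (use h th in auto)
    then have "0 \<le> real (Suc m) * ((-1) ^ n * fd h n (Lap (Mm m)) \<theta>)" by simp
    also have "real (Suc m) * ((-1) ^ n * fd h n (Lap (Mm m)) \<theta>) = (-1) ^ (n - 1) * fd h n (G m) \<theta>"
      unfolding fdG by (simp add: n' algebra_simps del: fd.simps)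
    finally show ?thesis .
  qed
  have "(\<lambda>m. (-1) ^ (n - 1) * fd h n (G m) \<theta>) \<longlonglongrightarrow> (-1) ^ (n - 1) * fd h n V \<theta>"
    by (rule tendsto_mult_left[OF lim])
  then have "0 \<le> (-1) ^ (n - 1) * fd h n V \<theta>"
    by (rule LIMSEQ_le_const) (use nonneg in auto)
  then show ?thesis by (simp add: V_def[abs_def])
qed

lemma LX_complex:
  assumes LX: "LX M u" and z: "z \<in> rhp"
  shows "Re (u (complex_of_real (Re z))) \<le> Re (u z)"
proof -
  have fin: "finite_measure (M 1)" "sets (M 1) = sets borel" using LX by (auto simp: LX_def ps_fin)
  have holu: "u holomorphic_on rhp" using LX by (simp add: LX_def)
  have hol: "(\<lambda>w. CL (M 1) w - exp (- u w)) holomorphic_on rhp"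
    by (intro holomorphic_intros CL_holo[OF fin] holu)
  have CLr: "CL (M 1) (complex_of_real \<theta>) = complex_of_real (Lap (M 1) \<theta>)" for \<theta>
  proof -
    have "CL (M 1) (complex_of_real \<theta>) = (\<integral>y. complex_of_real (indicator {..<\<infinity>} y * exp (- \<theta> * enn2real y)) \<partial>M 1)"
      unfolding CL_def by (rule Bochner_Integration.integral_cong) (auto simp: exp_of_real[symmetric])
    moreover have "(\<integral>y. complex_of_real (indicator {..<\<infinity>} y * exp (- \<theta> * enn2real y)) \<partial>M 1) = complex_of_real (Lap (M 1) \<theta>)"
      unfolding Lap_def by (rule integral_complex_of_real)
    ultimately show ?thesis by (simp only:)
  qed
  have "CL (M 1) z - exp (- u z) = 0"
  proof (rule ident_rhp[OF hol, of 1 2])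
    fix \<theta> :: real assume "1 < \<theta>"
    then show "CL (M 1) (complex_of_real \<theta>) - exp (- u (complex_of_real \<theta>)) = 0"
      using LX CLr by (simp add: LX_def)
  qed (use z in auto)
  then have eqz: "CL (M 1) z = exp (- u z)" by simp
  have Rz: "0 < Re z" using z by (simp add: rhp_def)
  have "exp (- Re (u z)) = norm (CL (M 1) z)" using eqz by simp
  also have "\<dots> \<le> (\<integral>y. norm (complex_of_real (indicator {..<\<infinity>} y) * exp (- z * complex_of_real (enn2real y))) \<partial>M 1)"
    unfolding CL_def by (rule integral_norm_bound)
  also have "\<dots> = Lap (M 1) (Re z)"
    unfolding Lap_def by (rule Bochner_Integration.integral_cong) (auto simp: norm_mult indicator_def)
  also have "\<dots> = exp (- Re (u (complex_of_real (Re z))))" using LX_real(2)[OF LX Rz, of 1] by simp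
  finally show ?thesis by simp
qed

lemma LX_W_BF:
  assumes LX: "LX M u" and W: "\<forall>\<theta>>0. \<theta> \<le> Re (u (complex_of_real \<theta>))"
  shows "BF_inf u"
proof (cases "\<forall>z\<in>rhp. u z = z")
  case True then show ?thesis by (simp add: BF_inf_def)
next
  case notid: False
  define V where "V \<theta> = Re (u (complex_of_real \<theta>))" for \<theta>
  have hol: "u holomorphic_on rhp" using LX by (simp add: LX_def)
  have Vge: "\<theta> \<le> V \<theta>" if "0 < \<theta>" for \<theta> using W that by (simp add: V_def)
  have Vmono: "V x \<le> V y" if "0 < x" "x \<le> y" for x y using LX_V_mono[OF LX that] by (simp add: V_def)
  have Vu: "u (complex_of_real \<theta>) = complex_of_real (V \<theta>)" if "0 < \<theta>" for \<theta>
    using LX_real(1)[OF LX that] by (simp add: V_def)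
  have BF: "BF u" unfolding BF_def
  proof (intro conjI)
    show "u holomorphic_on rhp" by fact
    show "\<forall>x>0. u (complex_of_real x) \<in> \<real>" using Vu by auto
    show "bernstein (\<lambda>x. Re (u (complex_of_real x)))"
      by (rule bern[OF hol]) (use LX_V_nonneg[OF LX] LX_fdsign[OF LX] in auto)
    have "1 \<le> V 1" using Vge[of 1] by simp
    then have "u 1 \<noteq> 0" using Vu[of 1] by auto
    then show "\<exists>z\<in>rhp. u z \<noteq> 0" by (intro bexI[of _ 1]) (auto simp: rhp_def)
  qed
  have iter_ge: "x \<le> (V ^^ n) x" if "0 < x" for n x
  proof (induction n)
    case 0 then show ?case by simp
  next
    case (Suc n)
    have "(V ^^ n) x \<le> V ((V ^^ n) x)" by (rule Vge) (use Suc that in linarith)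
    then show ?case using Suc by simp
  qed
  have iter_mono: "(V ^^ n) x \<le> (V ^^ n) y" if "0 < x" "x \<le> y" for n x y
  proof (induction n)
    case 0 then show ?case using that by simp
  next
    case (Suc n)
    have "0 < (V ^^ n) x" using iter_ge[OF that(1), of n] that by linarith
    then show ?case using Vmono Suc by simp
  qed
  have iter_Re: "(V ^^ n) (Re z) \<le> Re ((u ^^ n) z)" if z: "z \<in> rhp" for n z
  proof (induction n)
    case 0 then show ?case by simp
  next
    case (Suc n)
    define w where "w = (u ^^ n) z"
    have Rz: "0 < Re z" using z by (simp add: rhp_def)
    have "Re z \<le> (V ^^ n) (Re z)" by (rule iter_ge[OF Rz])
    then have Rw: "(V ^^ n) (Re z) \<le> Re w" "0 < (V ^^ n) (Re z)" using Suc Rz by (auto simp: w_def)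
    then have w: "w \<in> rhp" by (simp add: rhp_def)
    have "V ((V ^^ n) (Re z)) \<le> V (Re w)" by (rule Vmono) (use Rw in auto)
    also have "\<dots> \<le> Re (u w)" using LX_complex[OF LX w] by (simp add: V_def)
    finally show ?case by (simp add: w_def)
  qed
  have unb: "\<exists>n. R \<le> (V ^^ n) \<theta>0" if th0: "0 < \<theta>0" for \<theta>0 R
  proof (rule ccontr)
    assume "\<not> (\<exists>n. R \<le> (V ^^ n) \<theta>0)"
    then have bnd: "\<forall>n. (V ^^ n) \<theta>0 \<le> R" by (auto simp: not_le less_imp_le)
    define a where "a n = (V ^^ n) \<theta>0" for n
    have apos: "0 < a n" for n using iter_ge[OF th0, of n] th0 by (simp add: a_def)
    have inc: "incseq a"
    proof (rule incseq_SucI)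
      fix n show "a n \<le> a (Suc n)" using Vge[OF apos[of n]] by (simp add: a_def)
    qed
    obtain L where L: "a \<longlonglongrightarrow> L" "\<forall>i. a i \<le> L"
      using incseq_convergent[OF inc, of R] bnd by (auto simp: a_def)
    have Lpos: "0 < L" using L(2) apos[of 0] by (meson less_le_trans)
    have "complex_of_real L \<in> rhp" using Lpos by (simp add: rhp_def)
    then have "complex_of_real L \<in> interior rhp" by (simp add: interior_open[OF open_rhp])
    then have "isCont u (complex_of_real L)"
      using hol by (intro holomorphic_on_imp_continuous_on[THEN continuous_on_interior])
    then have "(\<lambda>n. u (complex_of_real (a n))) \<longlonglongrightarrow> u (complex_of_real L)"
      using L(1) by (intro isCont_tendsto_compose[where g=u] tendsto_of_real)
    then have "(\<lambda>n. V (a n)) \<longlonglongrightarrow> V L" unfolding V_def by (intro tendsto_Re)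
    moreover have "(\<lambda>n. V (a n)) \<longlonglongrightarrow> L"
    proof -
      have "(\<lambda>n. a (Suc n)) \<longlonglongrightarrow> L" using L(1) by (rule LIMSEQ_Suc)
      then show ?thesis by (simp add: a_def)
    qed
    ultimately have VL: "V L = L" by (rule LIMSEQ_unique)
    have Vid: "V \<theta> = \<theta>" if "0 < \<theta>" "\<theta> < L" for \<theta>
    proof -
      define h where "h = L - \<theta>"
      have h: "0 < h" using that by (simp add: h_def)
      have "0 \<le> (-1) ^ (Suc (Suc 0) - 1) * fd h (Suc (Suc 0)) V \<theta>"
        using LX_fdsign[OF LX _ h that(1), of "Suc (Suc 0)"] by (simp add: V_def[abs_def])
      then have "V (\<theta> + h + h) - V (\<theta> + h) - (V (\<theta> + h) - V \<theta>) \<le> 0" by simp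
      moreover have "\<theta> + h = L" by (simp add: h_def)
      moreover have "V (\<theta> + h) = L" using VL by (simp add: h_def)
      moreover have "\<theta> + h + h \<le> V (\<theta> + h + h)" by (rule Vge) (use h that in linarith)
      moreover have "\<theta> \<le> V \<theta>" by (rule Vge) fact
      ultimately show ?thesis using VL by linarith
    qed
    have "\<forall>z\<in>rhp. u z = z"
    proof
      fix z assume z: "z \<in> rhp"
      have "u z - z = 0"
      proof (rule ident_rhp[where f="\<lambda>z. u z - z" and a="L/2" and b=L])
        show "(\<lambda>z. u z - z) holomorphic_on rhp" by (intro holomorphic_intros hol)
        fix \<theta> :: real assume "L / 2 < \<theta>" "\<theta> < L"
        then show "u (complex_of_real \<theta>) - complex_of_real \<theta> = 0"
          using Vu[of \<theta>] Vid[of \<theta>] Lpos by auto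
      qed (use Lpos z in auto)
      then show "u z = z" by simp
    qed
    with notid show False by simp
  qed
  have DW: "DW_infinity u" unfolding DW_infinity_def
  proof (intro allI impI)
    fix K :: "complex set" and R :: real
    assume K: "compact K \<and> K \<subseteq> rhp"
    show "\<forall>\<^sub>F n in sequentially. \<forall>z\<in>K. R \<le> norm ((u ^^ n) z)"
    proof (cases "K = {}")
      case True then show ?thesis by simp
    next
      case False
      have "continuous_on K Re" by (intro continuous_intros)
      then obtain zm where zm: "zm \<in> K" "\<forall>y\<in>K. Re zm \<le> Re y"
        using continuous_attains_inf[of K Re] K False by auto
      define \<theta>0 where "\<theta>0 = Re zm"
      have th0: "0 < \<theta>0" using zm K by (auto simp: \<theta>0_def rhp_def)
      obtain n0 where n0: "R \<le> (V ^^ n0) \<theta>0" using unb[OF th0] by blast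
      have inc: "(V ^^ n0) \<theta>0 \<le> (V ^^ n) \<theta>0" if "n0 \<le> n" for n
      proof -
        have "(V ^^ n) \<theta>0 = (V ^^ (n - n0)) ((V ^^ n0) \<theta>0)"
          using that by (simp add: funpow_add[symmetric, THEN fun_cong, simplified])
        also have "(V ^^ n0) \<theta>0 \<le> \<dots>" 
          by (rule iter_ge) (use iter_ge[OF th0, of n0] th0 in linarith)
        finally show ?thesis by simp
      qed
      show ?thesis unfolding eventually_sequentially
      proof (intro exI[of _ n0] allI impI ballI)
        fix n z assume n: "n0 \<le> n" and z: "z \<in> K"
        have zr: "z \<in> rhp" using z K by auto
        have "R \<le> (V ^^ n) \<theta>0" using n0 inc[OF n] by linarith
        also have "\<dots> \<le> (V ^^ n) (Re z)" by (rule iter_mono) (use th0 zm z in \<open>auto simp: \<theta>0_def\<close>)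
        also have "\<dots> \<le> Re ((u ^^ n) z)" by (rule iter_Re[OF zr])
        also have "\<dots> \<le> norm ((u ^^ n) z)" by (rule complex_Re_le_cmod)
        finally show "R \<le> norm ((u ^^ n) z)" .
      qed
    qed
  qed
  show ?thesis unfolding BF_inf_def using BF notid DW by blast
qed

lemma LX_BF_W:
  assumes LX: "LX M u" and B: "BF_inf u"
  shows "\<forall>\<theta>>0. \<theta> \<le> Re (u (complex_of_real \<theta>))"
proof (cases "\<forall>z\<in>rhp. u z = z")
  case True
  then show ?thesis by (auto simp: rhp_def)
next
  case notid: False
  then have BF: "BF u" and DW: "DW_infinity u" using B by (auto simp: BF_inf_def)
  define V where "V \<theta> = Re (u (complex_of_real \<theta>))" for \<theta>
  have hol: "u holomorphic_on rhp" using LX by (simp add: LX_def)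
  have Vmono: "V x \<le> V y" if "0 < x" "x \<le> y" for x y using LX_V_mono[OF LX that] by (simp add: V_def)
  have Vnn: "0 \<le> V x" if "0 < x" for x using LX_V_nonneg[OF LX that] by (simp add: V_def)
  have Vu: "u (complex_of_real \<theta>) = complex_of_real (V \<theta>)" if "0 < \<theta>" for \<theta>
    using LX_real(1)[OF LX that] by (simp add: V_def)
  have Vpos: "0 < V \<theta>" if th: "0 < \<theta>" for \<theta>
  proof (rule ccontr)
    assume "\<not> 0 < V \<theta>"
    then have V0: "V \<theta> = 0" using Vnn[OF th] by simp
    have "\<forall>z\<in>rhp. u z = 0"
    proof
      fix z assume z: "z \<in> rhp"
      show "u z = 0"
      proof (rule ident_rhp[OF hol, of "\<theta>/2" \<theta>])
        fix x :: real assume x: "\<theta> / 2 < x" "x < \<theta>"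
        then have "0 < x" using th by simp
        then have "V x = 0" using Vnn[of x] Vmono[of x \<theta>] x V0 by simp
        then show "u (complex_of_real x) = 0" using Vu[OF \<open>0 < x\<close>] by simp
      qed (use th z in auto)
    qed
    then show False using BF by (auto simp: BF_def)
  qed
  show ?thesis
  proof (rule ccontr)
    assume "\<not> (\<forall>\<theta>>0. \<theta> \<le> Re (u (complex_of_real \<theta>)))"
    then obtain \<theta>0 where th0: "0 < \<theta>0" "V \<theta>0 < \<theta>0" by (auto simp: V_def not_le)
    define a where "a n = (V ^^ n) \<theta>0" for n
    have abnd: "0 < a n \<and> a n \<le> \<theta>0" for n
    proof (induction n)
      case 0 then show ?case using th0 by (simp add: a_def)
    next
      case (Suc n)
      have "V (a n) \<le> V \<theta>0" using Vmono Suc by auto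
      then show ?case using Vpos[of "a n"] Suc th0 by (simp add: a_def)
    qed
    have ua: "(u ^^ n) (complex_of_real \<theta>0) = complex_of_real (a n)" for n
    proof (induction n)
      case 0 then show ?case by (simp add: a_def)
    next
      case (Suc n)
      then show ?case using Vu[of "a n"] abnd[of n] by (simp add: a_def)
    qed
    have "compact {complex_of_real \<theta>0} \<and> {complex_of_real \<theta>0} \<subseteq> rhp" using th0 by (simp add: rhp_def)
    then have "\<forall>\<^sub>F n in sequentially. \<forall>z\<in>{complex_of_real \<theta>0}. \<theta>0 + 1 \<le> norm ((u ^^ n) z)"
      using DW unfolding DW_infinity_def by blast
    then obtain N where "\<forall>n\<ge>N. \<theta>0 + 1 \<le> norm ((u ^^ n) (complex_of_real \<theta>0))"
      by (auto simp: eventually_sequentially)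
    then have "\<theta>0 + 1 \<le> norm (complex_of_real (a N))" using ua by auto
    then show False using abnd[of N] by simp
  qed
qed

lemma K1:
  assumes ps: "prob_space \<mu>" and sb: "sets \<mu> = sets borel" and x: "0 < x"
    and m0: "measure \<mu> {..<ennreal x} = 0" and th: "0 < \<theta>"
  shows "Lap \<mu> \<theta> \<le> exp (- \<theta> * x)"
proof -
  interpret prob_space \<mu> by fact
  have fin: "finite_measure \<mu>" by (rule ps_fin[OF ps])
  have Ams: "{..<ennreal x} \<in> sets \<mu>" using sb by simp
  have "emeasure \<mu> {..<ennreal x} = 0" using m0 Ams by (simp add: emeasure_eq_measure)
  then have null: "{..<ennreal x} \<in> null_sets \<mu>" using Ams by auto
  have AE: "AE y in \<mu>. indicator {..<\<infinity>} y * exp (- \<theta> * enn2real y) \<le> exp (- \<theta> * x)"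
  proof (rule AE_I'[OF null], safe)
    fix y assume y: "y \<in> space \<mu>" and ny: "\<not> indicator {..<\<infinity>} y * exp (- \<theta> * enn2real y) \<le> exp (- \<theta> * x)"
    show "y < ennreal x"
    proof (rule ccontr)
      assume "\<not> y < ennreal x"
      then have yx: "ennreal x \<le> y" by simp
      show False
      proof (cases "y < \<infinity>")
        case True
        have "enn2real (ennreal x) \<le> enn2real y" by (rule enn2real_mono[OF yx]) (use True in simp)
        then have "x \<le> enn2real y" using x by simp
        then have "exp (- \<theta> * enn2real y) \<le> exp (- \<theta> * x)" using th by simp
        then show False using ny True by simp
      next
        case False then show False using ny by simp
      qed
    qed
  qed
  have i1: "integrable \<mu> (\<lambda>y. indicator {..<\<infinity>} y * (exp (- 0 * enn2real y) - 1) ^ 0 * exp (- \<theta> * enn2real y))"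
    by (rule Lap_int[OF fin sb]) (use th in auto)
  have "Lap \<mu> \<theta> \<le> (\<integral>y. exp (- \<theta> * x) \<partial>\<mu>)"
    unfolding Lap_def by (rule integral_mono_AE) (use i1 AE in auto)
  then show ?thesis by (simp add: prob_space)
qed

lemma K2:
  assumes ps: "prob_space \<mu>" and sb: "sets \<mu> = sets borel" and x: "0 < x"
    and L: "\<And>\<theta>. 0 < \<theta> \<Longrightarrow> Lap \<mu> \<theta> \<le> exp (- \<theta> * x)"
  shows "measure \<mu> {..<ennreal x} = 0"
proof -
  interpret prob_space \<mu> by fact
  have fin: "finite_measure \<mu>" by (rule ps_fin[OF ps])
  have Aeps: "measure \<mu> {..ennreal (x - \<epsilon>)} = 0" if e: "0 < \<epsilon>" "\<epsilon> < x" for \<epsilon>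
  proof -
    define A where "A = {..ennreal (x - \<epsilon>)}"
    have Ams: "A \<in> sets \<mu>" using sb by (simp add: A_def)
    have bnd: "measure \<mu> A \<le> exp (- \<theta> * \<epsilon>)" if th: "0 < \<theta>" for \<theta>
    proof -
      have i1: "integrable \<mu> (\<lambda>y. indicator {..<\<infinity>} y * (exp (- 0 * enn2real y) - 1) ^ 0 * exp (- \<theta> * enn2real y))"
        by (rule Lap_int[OF fin sb]) (use th in auto)
      have i2: "integrable \<mu> (\<lambda>y. indicator A y * exp (- \<theta> * (x - \<epsilon>)))"
        using Ams by (intro integrable_mult_left integrable_real_indicator) (auto simp: emeasure_eq_measure)
      have pw: "indicator A y * exp (- \<theta> * (x - \<epsilon>)) \<le> indicator {..<\<infinity>} y * exp (- \<theta> * enn2real y)" for y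
      proof (cases "y \<in> A")
        case True
        then have yl: "y \<le> ennreal (x - \<epsilon>)" by (simp add: A_def)
        then have yf: "y < \<infinity>" using le_less_trans[OF yl ennreal_less_top] by simp
        have "enn2real y \<le> enn2real (ennreal (x - \<epsilon>))" by (rule enn2real_mono[OF yl]) simp
        then have "enn2real y \<le> x - \<epsilon>" using e by simp
        then have "exp (- \<theta> * (x - \<epsilon>)) \<le> exp (- \<theta> * enn2real y)" using th by simp
        then show ?thesis using True yf by simp
      next
        case False then show ?thesis by (simp add: indicator_def)
      qed
      have "measure \<mu> A * exp (- \<theta> * (x - \<epsilon>)) = (\<integral>y. indicator A y * exp (- \<theta> * (x - \<epsilon>)) \<partial>\<mu>)"
        using Ams by (simp add: Int_absorb2 sets.sets_into_space)
      also have "\<dots> \<le> Lap \<mu> \<theta>" unfolding Lap_def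
        by (rule integral_mono) (use i1 i2 pw in auto)
      also have "\<dots> \<le> exp (- \<theta> * x)" by (rule L[OF th])
      finally have "measure \<mu> A * exp (- \<theta> * (x - \<epsilon>)) \<le> exp (- \<theta> * x)" .
      then have "measure \<mu> A \<le> exp (- \<theta> * x) / exp (- \<theta> * (x - \<epsilon>))" by (simp add: le_divide_eq)
      also have "\<dots> = exp (- \<theta> * \<epsilon>)" by (simp add: exp_diff[symmetric] algebra_simps)
      finally show ?thesis .
    qed
    have lim: "(\<lambda>n. exp (- real (Suc n) * \<epsilon>)) \<longlonglongrightarrow> 0" using e by real_asymp
    have bn: "\<forall>n. measure \<mu> A \<le> exp (- real (Suc n) * \<epsilon>)"
    proof
      fix n show "measure \<mu> A \<le> exp (- real (Suc n) * \<epsilon>)" using bnd[of "real (Suc n)"] by simp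
    qed
    have "measure \<mu> A \<le> 0"
      by (rule LIMSEQ_le_const[OF lim]) (use bn in blast)
    then show ?thesis by (simp add: A_def measure_nonneg antisym)
  qed
  define N where "N n = {..ennreal (x - x / (real n + 2))}" for n :: nat
  have Nnull: "N n \<in> null_sets \<mu>" for n
  proof -
    have xn: "0 \<le> x * real n" using x by simp
    have "x * (real n + 2) = x * real n + 2 * x" by (simp add: algebra_simps)
    then have "x < x * (real n + 2)" using xn x by linarith
    then have e: "0 < x / (real n + 2)" "x / (real n + 2) < x" using x by (simp_all add: divide_less_eq)
    have "measure \<mu> (N n) = 0" unfolding N_def by (rule Aeps[OF e])
    moreover have "N n \<in> sets \<mu>" using sb by (simp add: N_def)
    ultimately show ?thesis by (intro null_setsI) (simp_all add: emeasure_eq_measure)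
  qed
  have sub: "{..<ennreal x} \<subseteq> (\<Union>n. N n)"
  proof
    fix y assume "y \<in> {..<ennreal x}"
    then have y: "y < ennreal x" by simp
    have yf: "y < top" using less_trans[OF y ennreal_less_top] .
    define r where "r = enn2real y"
    have r: "y = ennreal r" "0 \<le> r" using yf by (simp_all add: r_def)
    then have rx: "r < x" using y x by (simp add: ennreal_less_iff)
    obtain n :: nat where n: "x / (x - r) < real n" using reals_Archimedean2 by blast
    have xr: "0 < x - r" using rx by simp
    have "x < real n * (x - r)" using n xr by (simp add: divide_less_eq)
    then have "x < (real n + 2) * (x - r)" using xr by (simp add: algebra_simps)
    then have "x / (real n + 2) < x - r" by (simp add: divide_less_eq add_pos_nonneg mult.commute)
    then have "r \<le> x - x / (real n + 2)" by simp
    then have "y \<in> N n" unfolding N_def using r by (simp add: ennreal_leI)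
    then show "y \<in> (\<Union>n. N n)" by blast
  qed
  have "(\<Union>n. N n) \<in> null_sets \<mu>" using Nnull by (rule null_sets_UN)
  then have "{..<ennreal x} \<in> null_sets \<mu>" by (rule null_sets_subset[OF _ _ sub]) (simp add: sb)
  then show ?thesis by (simp add: measure_def null_setsD1)
qed

lemma nat_filt_props:
  assumes meas: "\<And>r. r \<in> {s..t} \<Longrightarrow> Z r \<in> borel_measurable M" and fin: "finite_measure M"
  shows "sigma_finite_subalgebra M (nat_filt M Z s t)"
    and "\<And>r. r \<in> {s..t} \<Longrightarrow> Z r \<in> borel_measurable (nat_filt M Z s t)"
proof -
  define G where "G = (\<Union>r\<in>{s..t}. {Z r -` B \<inter> space M | B. B \<in> sets (borel :: ennreal measure)})"
  have GM: "G \<subseteq> sets M" unfolding G_def using meas by (auto intro: measurable_sets)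
  then have GP: "G \<subseteq> Pow (space M)" using sets.sets_into_space by blast
  have sp: "space (nat_filt M Z s t) = space M" unfolding nat_filt_def by (simp add: space_measure_of_conv)
  have st: "sets (nat_filt M Z s t) = sigma_sets (space M) G"
    unfolding nat_filt_def G_def[symmetric] using GP by (simp add: sets_measure_of_conv)
  have sub: "subalgebra M (nat_filt M Z s t)"
    unfolding subalgebra_def using sp st sets.sigma_sets_subset[OF GM] by simp
  have "finite_measure_subalgebra M (nat_filt M Z s t)"
    unfolding finite_measure_subalgebra_def finite_measure_subalgebra_axioms_def using fin sub by simp
  then show "sigma_finite_subalgebra M (nat_filt M Z s t)" by (rule finite_measure_subalgebra_is_sigma_finite)
  fix r assume r: "r \<in> {s..t}"
  show "Z r \<in> borel_measurable (nat_filt M Z s t)"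
  proof (rule measurableI)
    fix A :: "ennreal set" assume "A \<in> sets borel"
    then have "Z r -` A \<inter> space M \<in> G" unfolding G_def using r by blast
    then show "Z r -` A \<inter> space (nat_filt M Z s t) \<in> sets (nat_filt M Z s t)"
      unfolding sp st by (rule sigma_sets.Basic)
  qed simp
qed

lemma bp_kernel:
  assumes bp: "branching_process P Z k" and st: "0 \<le> s" "s \<le> t"
  shows "prob_space (k s t x)" "sets (k s t x) = sets borel"
  using bp st by (auto simp: branching_process_def branching_kernels_def)

lemma bp_markov:
  assumes bp: "branching_process P Z k"
  shows "\<And>s t u x f. 0 \<le> s \<Longrightarrow> s \<le> t \<Longrightarrow> t \<le> u \<Longrightarrow> f \<in> borel_measurable borel \<Longrightarrow> bounded (range f) \<Longrightarrow>
    AE \<omega> in P s x. real_cond_exp (P s x) (nat_filt (P s x) Z s t) (\<lambda>\<omega>. f (Z u \<omega>)) \<omega> = (\<integral>y. f y \<partial>(k t u (Z t \<omega>)))"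
  using bp unfolding branching_process_def by blast

lemma bounded_indicator: "bounded (range (indicator B :: ennreal \<Rightarrow> real))"
  by (rule bounded_subset[OF finite_imp_bounded[of "{0, 1}"]]) (auto simp: indicator_def)

lemma law:
  assumes bp: "branching_process P Z k" and s: "0 \<le> s" "s \<le> r" and B: "B \<in> sets borel"
  shows "measure (P s x) {\<omega> \<in> space (P s x). Z r \<omega> \<in> B} = measure (k s r x) B"
proof -
  define M where "M = P s x"
  have ps: "prob_space M" using bp s by (simp add: branching_process_def M_def)
  interpret prob_space M by fact
  have meas: "Z r' \<in> borel_measurable M" if "s \<le> r'" for r'
    using bp s that by (simp add: branching_process_def M_def)
  have sfs: "sigma_finite_subalgebra M (nat_filt M Z s s)"
    by (rule nat_filt_props(1)) (use meas ps_fin[OF ps] in auto)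
  have mk: "prob_space (k s r x)" "sets (k s r x) = sets borel" using bp_kernel[OF bp s] by auto
  have Zs: "AE \<omega> in M. Z s \<omega> = x" unfolding M_def using bp s by (simp add: branching_process_def)
  have mark: "AE \<omega> in M. real_cond_exp M (nat_filt M Z s s) (\<lambda>\<omega>. indicator B (Z r \<omega>)) \<omega>
      = (\<integral>y. indicator B y \<partial>(k s r (Z s \<omega>)))"
    unfolding M_def by (rule bp_markov[OF bp]) (use s B bounded_indicator[of B] in auto)
  have mZ: "(\<lambda>\<omega>. indicator B (Z r \<omega>) :: real) \<in> borel_measurable M"
    using meas[OF s(2)] B by measurable
  have int: "integrable M (\<lambda>\<omega>. indicator B (Z r \<omega>) :: real)"
    by (rule integrable_const_bound[where B=1]) (use mZ in \<open>auto simp: indicator_def\<close>)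
  have spk: "space (k s r x) = UNIV" using sets_eq_imp_space_eq[OF mk(2)] by simp
  have "AE \<omega> in M. real_cond_exp M (nat_filt M Z s s) (\<lambda>\<omega>. indicator B (Z r \<omega>)) \<omega> = measure (k s r x) B"
    using mark Zs by eventually_elim (simp add: spk)
  then have "(\<integral>\<omega>. real_cond_exp M (nat_filt M Z s s) (\<lambda>\<omega>. indicator B (Z r \<omega>)) \<omega> \<partial>M) = (\<integral>\<omega>. measure (k s r x) B \<partial>M)"
    by (intro integral_cong_AE) (simp_all add: borel_measurable_cond_exp2)
  also have "\<dots> = measure (k s r x) B" by (simp add: prob_space)
  finally have c1: "(\<integral>\<omega>. real_cond_exp M (nat_filt M Z s s) (\<lambda>\<omega>. indicator B (Z r \<omega>)) \<omega> \<partial>M) = measure (k s r x) B" .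
  have c2: "(\<integral>\<omega>. real_cond_exp M (nat_filt M Z s s) (\<lambda>\<omega>. indicator B (Z r \<omega>)) \<omega> \<partial>M) = (\<integral>\<omega>. indicator B (Z r \<omega>) \<partial>M)"
    by (rule sigma_finite_subalgebra.real_cond_exp_int(2)[OF sfs int])
  have Sm: "{\<omega> \<in> space M. Z r \<omega> \<in> B} \<in> sets M" using meas[OF s(2)] B by measurable
  have c3: "(\<integral>\<omega>. indicator B (Z r \<omega>) \<partial>M) = measure M {\<omega> \<in> space M. Z r \<omega> \<in> B}"
  proof -
    have "(\<integral>\<omega>. indicator B (Z r \<omega>) \<partial>M) = (\<integral>\<omega>. indicator {\<omega> \<in> space M. Z r \<omega> \<in> B} \<omega> \<partial>M)"
      by (rule Bochner_Integration.integral_cong) (auto simp: indicator_def)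
    also have "\<dots> = measure M {\<omega> \<in> space M. Z r \<omega> \<in> B}" using Sm
      by (simp add: Int_absorb2 sets.sets_into_space)
    finally show ?thesis .
  qed
  show ?thesis using c1 c2 c3 by (simp add: M_def)
qed

lemma c_iff_kernel:
  assumes bp: "branching_process P Z k" and st: "0 \<le> s" "s \<le> t"
  shows "measure (P s y) {\<omega> \<in> space (P s y). y \<le> Z t \<omega>} = 1
     \<longleftrightarrow> measure (k s t y) {..<y} = 0"
proof -
  define M where "M = P s y"
  have ps: "prob_space M" using bp st by (simp add: branching_process_def M_def)
  interpret prob_space M by fact
  have meas: "Z t \<in> borel_measurable M" using bp st by (simp add: branching_process_def M_def)
  have A: "{\<omega> \<in> space M. Z t \<omega> \<in> {..<y}} \<in> sets M" using meas by measurable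
  have eq: "{\<omega> \<in> space M. y \<le> Z t \<omega>} = space M - {\<omega> \<in> space M. Z t \<omega> \<in> {..<y}}" by auto
  have "measure M {\<omega> \<in> space M. y \<le> Z t \<omega>} = 1 - measure (k s t y) {..<y}"
    unfolding eq prob_compl[OF A] using law[OF bp st, of "{..<y}" y] by (simp add: M_def)
  then show ?thesis by (simp add: M_def)
qed

lemma kernel_small:
  assumes bp: "branching_process P Z k" and tu: "0 \<le> t" "t \<le> u"
    and K: "\<And>y. 0 < y \<Longrightarrow> measure (k t u (ennreal y)) {..<ennreal y} = 0"
    and cz: "c < z"
  shows "measure (k t u z) {..<c} = 0"
proof (cases "z = \<infinity>")
  case True
  have "k t u \<infinity> = return borel \<infinity>" using bp tu by (auto simp: branching_process_def branching_kernels_def)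
  then show ?thesis using True by (simp add: measure_return)
next
  case False
  define y where "y = enn2real z"
  have z: "z = ennreal y" using False by (simp add: y_def less_top)
  have y: "0 < y" using cz z by (metis ennreal_less_zero_iff le_less_trans zero_le)
  have fin: "finite_measure (k t u z)" using bp_kernel[OF bp tu] ps_fin by blast
  have sb: "sets (k t u z) = sets borel" using bp_kernel[OF bp tu] by blast
  have "measure (k t u z) {..<c} \<le> measure (k t u z) {..<ennreal y}"
    by (rule finite_measure.finite_measure_mono[OF fin]) (use cz z sb in auto)
  also have "\<dots> = 0" using K[OF y] z by simp
  finally show ?thesis by (simp add: antisym measure_nonneg)
qed

lemma b_from_c:
  assumes bp: "branching_process P Z k"
    and K: "\<And>t u y. 0 \<le> t \<Longrightarrow> t \<le> u \<Longrightarrow> 0 < y \<Longrightarrow> measure (k t u (ennreal y)) {..<ennreal y} = 0"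
    and st: "0 \<le> s" "s \<le> t" "t \<le> u"
  shows "measure (P s x) {\<omega> \<in> space (P s x). Z t \<omega> \<le> Z u \<omega>} = 1"
proof -
  define M where "M = P s x"
  define F where "F = nat_filt M Z s t"
  have ps: "prob_space M" using bp st by (simp add: branching_process_def M_def)
  interpret prob_space M by fact
  have meas: "Z r \<in> borel_measurable M" if "s \<le> r" for r
    using bp st that by (simp add: branching_process_def M_def)
  have sfs: "sigma_finite_subalgebra M F" unfolding F_def
    by (rule nat_filt_props(1)) (use meas ps_fin[OF ps] in auto)
  have ZtF: "Z t \<in> borel_measurable F" unfolding F_def
    by (rule nat_filt_props(2)) (use meas ps_fin[OF ps] st in auto)
  have mt: "Z t \<in> borel_measurable M" using meas st by simp
  have mu: "Z u \<in> borel_measurable M" using meas st by simp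
  define N where "N q = {\<omega> \<in> space M. Z u \<omega> < ennreal (real_of_rat q) \<and> ennreal (real_of_rat q) < Z t \<omega>}" for q
  have Nnull: "N q \<in> null_sets M" for q
  proof -
    define c where "c = ennreal (real_of_rat q)"
    define f where "f \<omega> = (indicator {c<..} (Z t \<omega>) :: real)" for \<omega>
    define g where "g \<omega> = (indicator {..<c} (Z u \<omega>) :: real)" for \<omega>
    have fF: "f \<in> borel_measurable F" unfolding f_def using ZtF by measurable
    have fM: "f \<in> borel_measurable M" unfolding f_def using mt by measurable
    have gM: "g \<in> borel_measurable M" unfolding g_def using mu by measurable
    have fgM: "(\<lambda>\<omega>. f \<omega> * g \<omega>) \<in> borel_measurable M" using fM gM by (rule borel_measurable_times)
    have int: "integrable M (\<lambda>\<omega>. f \<omega> * g \<omega>)"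
      by (rule integrable_const_bound[where B=1, OF _ fgM]) (auto simp: f_def g_def indicator_def)
    have e1: "(\<integral>\<omega>. f \<omega> * real_cond_exp M F g \<omega> \<partial>M) = (\<integral>\<omega>. f \<omega> * g \<omega> \<partial>M)"
      by (rule sigma_finite_subalgebra.real_cond_exp_intg(2)[OF sfs int fF gM])
    have mark: "AE \<omega> in M. real_cond_exp M F g \<omega> = (\<integral>y. indicator {..<c} y \<partial>(k t u (Z t \<omega>)))"
      unfolding M_def F_def g_def by (rule bp_markov[OF bp]) (use st bounded_indicator in auto)
    have "AE \<omega> in M. f \<omega> * real_cond_exp M F g \<omega> = 0"
      using mark
    proof eventually_elim
      case (elim \<omega>)
      show ?case
      proof (cases "c < Z t \<omega>")
        case True
        have sp: "space (k t u (Z t \<omega>)) = UNIV"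
          using sets_eq_imp_space_eq[OF bp_kernel(2)[OF bp, of t u]] st by simp
        have "measure (k t u (Z t \<omega>)) {..<c} = 0"
          by (rule kernel_small[OF bp _ _ _ True]) (use K st in auto)
        then show ?thesis using elim sp by simp
      next
        case False then show ?thesis by (simp add: f_def)
      qed
    qed
    then have "(\<integral>\<omega>. f \<omega> * real_cond_exp M F g \<omega> \<partial>M) = (\<integral>\<omega>. 0 \<partial>M)"
      by (intro integral_cong_AE) (use fM in simp_all)
    then have z: "(\<integral>\<omega>. f \<omega> * g \<omega> \<partial>M) = 0" using e1 by simp
    have Nm: "N q \<in> sets M" unfolding N_def using mt mu by measurable
    have "(\<integral>\<omega>. f \<omega> * g \<omega> \<partial>M) = (\<integral>\<omega>. indicator (N q) \<omega> \<partial>M)"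
      by (rule Bochner_Integration.integral_cong) (auto simp: f_def g_def N_def c_def indicator_def)
    also have "\<dots> = measure M (N q)" using Nm by (simp add: Int_absorb2 sets.sets_into_space)
    finally have "measure M (N q) = 0" using z by simp
    then show ?thesis using Nm by (intro null_setsI) (simp_all add: emeasure_eq_measure)
  qed
  have U: "(\<Union>q\<in>UNIV. N q) \<in> null_sets M" by (rule null_sets_UN') (use Nnull in auto)
  have "AE \<omega> in M. Z t \<omega> \<le> Z u \<omega>"
  proof (rule AE_I'[OF U])
    show "{\<omega> \<in> space M. \<not> Z t \<omega> \<le> Z u \<omega>} \<subseteq> (\<Union>q\<in>UNIV. N q)"
    proof
      fix \<omega> assume "\<omega> \<in> {\<omega> \<in> space M. \<not> Z t \<omega> \<le> Z u \<omega>}"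
      then have w: "\<omega> \<in> space M" "Z u \<omega> < Z t \<omega>" by auto
      from ennreal_rat_dense[OF w(2)] obtain q :: rat where
        "Z u \<omega> < ennreal (real_of_rat q)" "ennreal (real_of_rat q) < Z t \<omega>" by blast
      then show "\<omega> \<in> (\<Union>q\<in>UNIV. N q)" using w by (auto simp: N_def)
    qed
  qed
  moreover have A: "{\<omega> \<in> space M. Z t \<omega> \<le> Z u \<omega>} \<in> events" using mt mu by measurable
  ultimately have "AE \<omega> in M. \<omega> \<in> {\<omega> \<in> space M. Z t \<omega> \<le> Z u \<omega>}" by (auto elim: AE_mp intro: AE_space[THEN AE_mp])
  then show ?thesis using AE_in_set_eq_1[OF A] by (simp add: M_def)
qed

theorem mainTheorem12:
  fixes P :: "real \<Rightarrow> ennreal \<Rightarrow> 'w measure"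
    and Z :: "real \<Rightarrow> 'w \<Rightarrow> ennreal"
    and k :: "real \<Rightarrow> real \<Rightarrow> ennreal \<Rightarrow> ennreal measure"
    and v :: "real \<Rightarrow> real \<Rightarrow> complex \<Rightarrow> complex"
  assumes "branching_process P Z k"
    and "laplace_exponents k v"
  shows "((\<forall>s t. 0 \<le> s \<and> s \<le> t \<longrightarrow> BF_inf (v s t))
      \<longleftrightarrow> (\<forall>s t u x. 0 \<le> s \<and> s \<le> t \<and> t \<le> u \<and> 0 < x \<longrightarrow>
             measure (P s (ennreal x)) {\<omega> \<in> space (P s (ennreal x)). Z t \<omega> \<le> Z u \<omega>} = 1))
    \<and> ((\<forall>s t. 0 \<le> s \<and> s \<le> t \<longrightarrow> BF_inf (v s t))
      \<longleftrightarrow> (\<forall>s t x. 0 \<le> s \<and> s \<le> t \<and> 0 < x \<longrightarrow>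
             measure (P s (ennreal x)) {\<omega> \<in> space (P s (ennreal x)). ennreal x \<le> Z t \<omega>} = 1))
    \<and> ((\<forall>s t. 0 \<le> s \<and> s \<le> t \<longrightarrow> BF_inf (v s t))
      \<longleftrightarrow> (\<forall>s t. 0 \<le> s \<and> s \<le> t \<longrightarrow> (\<exists>x>0.
             measure (P s (ennreal x)) {\<omega> \<in> space (P s (ennreal x)). ennreal x \<le> Z t \<omega>} = 1)))"
proof -
  note bp = assms(1)
  define W where "W s t \<longleftrightarrow> (\<forall>\<theta>>0. \<theta> \<le> Re (v s t (complex_of_real \<theta>)))" for s t
  have LXst: "LX (\<lambda>x. k s t (ennreal x)) (v s t)" if st: "0 \<le> s" "s \<le> t" for s t
    unfolding LX_def using assms(2) bp_kernel[OF bp st] st by (auto simp: laplace_exponents_def Lap_def)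
  have Wiff: "BF_inf (v s t) \<longleftrightarrow> W s t" if st: "0 \<le> s" "s \<le> t" for s t
    using LX_W_BF[OF LXst[OF st]] LX_BF_W[OF LXst[OF st]] by (auto simp: W_def)
  have Kiff: "W s t \<longleftrightarrow> measure (k s t (ennreal x)) {..<ennreal x} = 0"
    if st: "0 \<le> s" "s \<le> t" and x: "0 < x" for s t x
  proof
    assume W: "W s t"
    show "measure (k s t (ennreal x)) {..<ennreal x} = 0"
    proof (rule K2[OF bp_kernel[OF bp st] x])
      fix \<theta> :: real assume th: "0 < \<theta>"
      have "Lap (k s t (ennreal x)) \<theta> = exp (- x * Re (v s t (complex_of_real \<theta>)))"
        using LX_real(2)[OF LXst[OF st] th x] .
      also have "\<dots> \<le> exp (- \<theta> * x)"
        using W th x by (simp add: W_def mult.commute mult_left_mono)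
      finally show "Lap (k s t (ennreal x)) \<theta> \<le> exp (- \<theta> * x)" .
    qed
  next
    assume m: "measure (k s t (ennreal x)) {..<ennreal x} = 0"
    show "W s t" unfolding W_def
    proof (intro allI impI)
      fix \<theta> :: real assume th: "0 < \<theta>"
      have "exp (- x * Re (v s t (complex_of_real \<theta>))) = Lap (k s t (ennreal x)) \<theta>"
        using LX_real(2)[OF LXst[OF st] th x] by simp
      also have "\<dots> \<le> exp (- \<theta> * x)" by (rule K1[OF bp_kernel[OF bp st] x m th])
      finally have "\<theta> * x \<le> x * Re (v s t (complex_of_real \<theta>))" by simp
      then show "\<theta> \<le> Re (v s t (complex_of_real \<theta>))" using x by (simp add: mult.commute)
    qed
  qed
  have Ciff: "measure (P s (ennreal x)) {\<omega> \<in> space (P s (ennreal x)). ennreal x \<le> Z t \<omega>} = 1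
      \<longleftrightarrow> W s t" if st: "0 \<le> s" "s \<le> t" and x: "0 < x" for s t x
    using c_iff_kernel[OF bp st] Kiff[OF st x] by simp
  have AW: "(\<forall>s t. 0 \<le> s \<and> s \<le> t \<longrightarrow> BF_inf (v s t)) \<longleftrightarrow> (\<forall>s t. 0 \<le> s \<and> s \<le> t \<longrightarrow> W s t)"
    using Wiff by blast
  have AC: "(\<forall>s t. 0 \<le> s \<and> s \<le> t \<longrightarrow> W s t) \<longleftrightarrow> (\<forall>s t x. 0 \<le> s \<and> s \<le> t \<and> 0 < x \<longrightarrow>
             measure (P s (ennreal x)) {\<omega> \<in> space (P s (ennreal x)). ennreal x \<le> Z t \<omega>} = 1)"
  proof (intro iffI allI impI)
    fix s t x :: real assume H: "\<forall>s t. 0 \<le> s \<and> s \<le> t \<longrightarrow> W s t" and h: "0 \<le> s \<and> s \<le> t \<and> 0 < x"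
    then show "measure (P s (ennreal x)) {\<omega> \<in> space (P s (ennreal x)). ennreal x \<le> Z t \<omega>} = 1"
      using Ciff[of s t x] by simp
  next
    fix s t :: real assume H: "\<forall>s t x. 0 \<le> s \<and> s \<le> t \<and> 0 < x \<longrightarrow>
             measure (P s (ennreal x)) {\<omega> \<in> space (P s (ennreal x)). ennreal x \<le> Z t \<omega>} = 1"
      and h: "0 \<le> s \<and> s \<le> t"
    then show "W s t" using H[rule_format, of s t 1] Ciff[of s t 1] by simp
  qed
  have AD: "(\<forall>s t. 0 \<le> s \<and> s \<le> t \<longrightarrow> W s t) \<longleftrightarrow> (\<forall>s t. 0 \<le> s \<and> s \<le> t \<longrightarrow> (\<exists>x>0.
             measure (P s (ennreal x)) {\<omega> \<in> space (P s (ennreal x)). ennreal x \<le> Z t \<omega>} = 1))"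
  proof (intro iffI allI impI)
    fix s t :: real assume H: "\<forall>s t. 0 \<le> s \<and> s \<le> t \<longrightarrow> W s t" and h: "0 \<le> s \<and> s \<le> t"
    then have "measure (P s (ennreal 1)) {\<omega> \<in> space (P s (ennreal 1)). ennreal 1 \<le> Z t \<omega>} = 1"
      using Ciff[of s t 1] by simp
    then show "\<exists>x>0. measure (P s (ennreal x)) {\<omega> \<in> space (P s (ennreal x)). ennreal x \<le> Z t \<omega>} = 1"
      by (intro exI[of _ 1]) simp
  next
    fix s t :: real assume H: "\<forall>s t. 0 \<le> s \<and> s \<le> t \<longrightarrow> (\<exists>x>0.
             measure (P s (ennreal x)) {\<omega> \<in> space (P s (ennreal x)). ennreal x \<le> Z t \<omega>} = 1)"
      and h: "0 \<le> s \<and> s \<le> t"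
    then obtain x where "0 < x" "measure (P s (ennreal x)) {\<omega> \<in> space (P s (ennreal x)). ennreal x \<le> Z t \<omega>} = 1"
      by blast
    then show "W s t" using Ciff[of s t x] h by simp
  qed
  have BC: "(\<forall>s t u x. 0 \<le> s \<and> s \<le> t \<and> t \<le> u \<and> 0 < x \<longrightarrow>
             measure (P s (ennreal x)) {\<omega> \<in> space (P s (ennreal x)). Z t \<omega> \<le> Z u \<omega>} = 1)
      \<longleftrightarrow> (\<forall>s t x. 0 \<le> s \<and> s \<le> t \<and> 0 < x \<longrightarrow>
             measure (P s (ennreal x)) {\<omega> \<in> space (P s (ennreal x)). ennreal x \<le> Z t \<omega>} = 1)"
  proof
    assume B: "\<forall>s t u x. 0 \<le> s \<and> s \<le> t \<and> t \<le> u \<and> 0 < x \<longrightarrow>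
             measure (P s (ennreal x)) {\<omega> \<in> space (P s (ennreal x)). Z t \<omega> \<le> Z u \<omega>} = 1"
    show "\<forall>s t x. 0 \<le> s \<and> s \<le> t \<and> 0 < x \<longrightarrow>
             measure (P s (ennreal x)) {\<omega> \<in> space (P s (ennreal x)). ennreal x \<le> Z t \<omega>} = 1"
    proof (intro allI impI)
      fix s t x :: real assume h: "0 \<le> s \<and> s \<le> t \<and> 0 < x"
      define M where "M = P s (ennreal x)"
      have ps: "prob_space M" using bp h by (simp add: branching_process_def M_def)
      interpret prob_space M by fact
      have ms: "Z s \<in> borel_measurable M" using bp h by (simp add: branching_process_def M_def)
      have mt: "Z t \<in> borel_measurable M" using bp h by (simp add: branching_process_def M_def)
      have Zs: "AE \<omega> in M. Z s \<omega> = ennreal x" unfolding M_def using bp h by (simp add: branching_process_def)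
      have A1: "{\<omega> \<in> space M. Z s \<omega> \<le> Z t \<omega>} \<in> events" using ms mt by measurable
      have A2: "{\<omega> \<in> space M. ennreal x \<le> Z t \<omega>} \<in> events" using mt by measurable
      have "prob {\<omega> \<in> space M. Z s \<omega> \<le> Z t \<omega>} = 1" using B h by (simp add: M_def)
      then have "AE \<omega> in M. \<omega> \<in> {\<omega> \<in> space M. Z s \<omega> \<le> Z t \<omega>}" using AE_in_set_eq_1[OF A1] by simp
      then have "AE \<omega> in M. \<omega> \<in> {\<omega> \<in> space M. ennreal x \<le> Z t \<omega>}" using Zs by eventually_elim auto
      then show "measure (P s (ennreal x)) {\<omega> \<in> space (P s (ennreal x)). ennreal x \<le> Z t \<omega>} = 1"
        using AE_in_set_eq_1[OF A2] by (simp add: M_def)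
    qed
  next
    assume C: "\<forall>s t x. 0 \<le> s \<and> s \<le> t \<and> 0 < x \<longrightarrow>
             measure (P s (ennreal x)) {\<omega> \<in> space (P s (ennreal x)). ennreal x \<le> Z t \<omega>} = 1"
    have K: "measure (k t u (ennreal y)) {..<ennreal y} = 0" if "0 \<le> t" "t \<le> u" "0 < y" for t u y
      using C c_iff_kernel[OF bp that(1,2), of "ennreal y"] that by auto
    show "\<forall>s t u x. 0 \<le> s \<and> s \<le> t \<and> t \<le> u \<and> 0 < x \<longrightarrow>
             measure (P s (ennreal x)) {\<omega> \<in> space (P s (ennreal x)). Z t \<omega> \<le> Z u \<omega>} = 1"
      using b_from_c[OF bp K] by blast
  qed
  show ?thesis
  proof (intro conjI)
    show "(\<forall>s t. 0 \<le> s \<and> s \<le> t \<longrightarrow> BF_inf (v s t))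
      \<longleftrightarrow> (\<forall>s t u x. 0 \<le> s \<and> s \<le> t \<and> t \<le> u \<and> 0 < x \<longrightarrow>
             measure (P s (ennreal x)) {\<omega> \<in> space (P s (ennreal x)). Z t \<omega> \<le> Z u \<omega>} = 1)"
      by (simp only: AW AC BC)
    show "(\<forall>s t. 0 \<le> s \<and> s \<le> t \<longrightarrow> BF_inf (v s t))
      \<longleftrightarrow> (\<forall>s t x. 0 \<le> s \<and> s \<le> t \<and> 0 < x \<longrightarrow>
             measure (P s (ennreal x)) {\<omega> \<in> space (P s (ennreal x)). ennreal x \<le> Z t \<omega>} = 1)"
      by (simp only: AW AC)
    show "(\<forall>s t. 0 \<le> s \<and> s \<le> t \<longrightarrow> BF_inf (v s t))
      \<longleftrightarrow> (\<forall>s t. 0 \<le> s \<and> s \<le> t \<longrightarrow> (\<exists>x>0.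
             measure (P s (ennreal x)) {\<omega> \<in> space (P s (ennreal x)). ennreal x \<le> Z t \<omega>} = 1))"
      by (simp only: AW AD)
  qed
qed

end
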